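(* For every integer $k \geq 3$ and every $\varepsilon > 0$ there exist $\gamma_0 > 0$ and $\rho > 0$ such that for all $0 < \mu \leq \gamma \leq \gamma_0$ there exists $n_0$ such that for all $n \geq n_0$ the following holds. Let $H$ be an $n$-vertex $k$-graph with $\delta_{k-1}(H) \geq (1/3 + \varepsilon) n$, and let $G$ be its $\gamma$-diamond graph. Suppose $G$ has a $\mu$-separation $\{A, B\}$. Then $H$ contains at least $\rho n^{k+2}$ distinct proto-balancers (with respect to the partition $\{A,B\}$).
   Context: $\delta_{k-1}(H)$ is the minimum over $(k-1)$-subsets of $V(H)$ of the number of edges containing it. For $x,y \in V(H)$, an $(x,y)$-diamond is a pair of edges $e,f$ of $H$ with $|e\cap f| = k-1$, $x \in e \setminus f$, $y \in f\setminus e$. The $\gamma$-diamond graph $G$ of $H$ has vertex set $V(H)$ and $xy \in E(G)$ iff $H$ has at least $\gamma\binom{n}{k-1}$ distinct $(x,y)$-diamonds. A partition $\{A,B\}$ of $V(G)$ into nonempty parts is a $\mu$-separation if $G$ has fewer than $\mu|A||B|$ edges between $A$ and $B$. An $(A,B)$-proto-balancer in $H$ is given by a $(k-3)$-set $S$ and three $3$-sets $X_1,X_2,X_3 \subseteq V(H)\setminus S$ with: $S \cup X_i \in E(H)$ for $i \in [3]$; $|X_1\cap A| = |X_2 \cap A| = |X_1\cap X_2| = |X_1\cap X_2\cap A| = 2$; $|X_3\cap A| = 0$; $|X_1\cap X_3| = |X_2\cap X_3| = 1$ (it is the subgraph with edges $S\cup X_1,S\cup X_2,S\cup X_3$, on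 $k+2$ vertices). A $(B,A)$-proto-balancer is the same with $A$ and $B$ exchanged; a proto-balancer is either of these. *)

theory Defs
  imports Complex_Main
begin

definition kgraph :: "nat \<Rightarrow> 'a set \<Rightarrow> 'a set set \<Rightarrow> bool" where
  "kgraph k V E \<longleftrightarrow> finite V \<and> (\<forall>e\<in>E. e \<subseteq> V \<and> card e = k)"

definition min_codegree :: "nat \<Rightarrow> 'a set \<Rightarrow> 'a set set \<Rightarrow> nat" where
  "min_codegree k V E = Min {card {e\<in>E. S \<subseteq> e} | S. S \<subseteq> V \<and> card S = k - 1}"

definition diamonds :: "nat \<Rightarrow> 'a set set \<Rightarrow> 'a \<Rightarrow> 'a \<Rightarrow> ('a set \<times> 'a set) set" where
  "diamonds k E x y = {(e, f). e \<in> E \<and> f \<in> E \<and> card (e \<inter> f) = k - 1 \<and> x \<in> e - f \<and> y \<in> f - e}"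

definition diamond_adj :: "nat \<Rightarrow> real \<Rightarrow> 'a set \<Rightarrow> 'a set set \<Rightarrow> 'a \<Rightarrow> 'a \<Rightarrow> bool" where
  "diamond_adj k \<gamma> V E x y \<longleftrightarrow> x \<in> V \<and> y \<in> V \<and> x \<noteq> y \<and>
     real (card (diamonds k E x y)) \<ge> \<gamma> * real (card V choose (k - 1))"

definition mu_separation :: "nat \<Rightarrow> real \<Rightarrow> real \<Rightarrow> 'a set \<Rightarrow> 'a set set \<Rightarrow> 'a set \<Rightarrow> 'a set \<Rightarrow> bool" where
  "mu_separation k \<gamma> \<mu> V E A B \<longleftrightarrow>
     A \<noteq> {} \<and> B \<noteq> {} \<and> A \<inter> B = {} \<and> A \<union> B = V \<and>
     real (card {(a, b). a \<in> A \<and> b \<in> B \<and> diamond_adj k \<gamma> V E a b})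
       < \<mu> * real (card A) * real (card B)"

definition is_proto_balancer ::
  "nat \<Rightarrow> 'a set \<Rightarrow> 'a set set \<Rightarrow> 'a set \<Rightarrow> 'a set \<Rightarrow> 'a set \<Rightarrow> 'a set \<Rightarrow> 'a set \<Rightarrow> bool" where
  "is_proto_balancer k V E A S X1 X2 X3 \<longleftrightarrow>
     S \<subseteq> V \<and> card S = k - 3 \<and>
     X1 \<subseteq> V - S \<and> X2 \<subseteq> V - S \<and> X3 \<subseteq> V - S \<and>
     card X1 = 3 \<and> card X2 = 3 \<and> card X3 = 3 \<and>
     S \<union> X1 \<in> E \<and> S \<union> X2 \<in> E \<and> S \<union> X3 \<in> E \<and>
     card (X1 \<inter> A) = 2 \<and> card (X2 \<inter> A) = 2 \<and> card (X1 \<inter> X2) = 2 \<and> card (X1 \<inter> X2 \<inter> A) = 2 \<and>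
     card (X3 \<inter> A) = 0 \<and> card (X1 \<inter> X3) = 1 \<and> card (X2 \<inter> X3) = 1"

definition proto_balancers :: "nat \<Rightarrow> 'a set \<Rightarrow> 'a set set \<Rightarrow> 'a set \<Rightarrow> 'a set set set" where
  "proto_balancers k V E A =
     {{S \<union> X1, S \<union> X2, S \<union> X3} | S X1 X2 X3. is_proto_balancer k V E A S X1 X2 X3}"

end

theory Submission
  imports Defs
begin

lemma card_fiber_bound:
  assumes "finite X" "\<And>y. y \<in> f ` X \<Longrightarrow> card {x\<in>X. f x = y} \<le> K"
  shows "card X \<le> K * card (f ` X)"
proof -
  have e: "X = (\<Union>y\<in>f`X. {x\<in>X. f x = y})" by auto
  have "card X = card (\<Union>y\<in>f`X. {x\<in>X. f x = y})" using e by simp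
  also have "\<dots> = (\<Sum>y\<in>f`X. card {x\<in>X. f x = y})"
    by (rule card_UN_disjoint) (use assms(1) in auto)
  also have "\<dots> \<le> (\<Sum>y\<in>f`X. K)" by (rule sum_mono) (use assms(2) in auto)
  also have "\<dots> = K * card (f ` X)" by simp
  finally show ?thesis .
qed

lemma sigma_lb:
  assumes "finite X" "\<And>x. x \<in> X \<Longrightarrow> finite (Y x)"
    "\<And>x. x \<in> X \<Longrightarrow> r \<le> real (card (Y x))" "0 \<le> r" "r0 \<le> real (card X)" "0 \<le> r0"
  shows "r0 * r \<le> real (card (Sigma X Y))"
proof -
  have "real (card (Sigma X Y)) = (\<Sum>x\<in>X. real (card (Y x)))"
    using assms(1,2) by simp
  also have "\<dots> \<ge> (\<Sum>x\<in>X. r)" by (rule sum_mono) (use assms(3) in auto)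
  finally have "real (card X) * r \<le> real (card (Sigma X Y))" by simp
  moreover have "r0 * r \<le> real (card X) * r" using assms(4,5) by (simp add: mult_right_mono)
  ultimately show ?thesis by linarith
qed

lemma p3_card:
  assumes "finite U" "X \<subseteq> U" "Y \<subseteq> U" "Z \<subseteq> U"
  shows "card X + card Y + card Z \<le> card U + 2 * card ((X\<inter>Y) \<union> (X\<inter>Z) \<union> (Y\<inter>Z))"
proof -
  have f: "finite X" "finite Y" "finite Z" using assms by (meson finite_subset)+
  have 1: "card X + card Y = card (X \<union> Y) + card (X \<inter> Y)" using f card_Un_Int by blast
  have 2: "card (X \<union> Y) + card Z = card (X \<union> Y \<union> Z) + card ((X \<union> Y) \<inter> Z)"
    using f card_Un_Int[of "X \<union> Y" Z] by blast
  have fp: "finite ((X\<inter>Y) \<union> (X\<inter>Z) \<union> (Y\<inter>Z))" using f by auto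
  have 3: "card (X \<inter> Y) \<le> card ((X\<inter>Y) \<union> (X\<inter>Z) \<union> (Y\<inter>Z))" by (rule card_mono[OF fp]) auto
  have 4: "card ((X \<union> Y) \<inter> Z) \<le> card ((X\<inter>Y) \<union> (X\<inter>Z) \<union> (Y\<inter>Z))" by (rule card_mono[OF fp]) auto
  have 5: "card (X \<union> Y \<union> Z) \<le> card U" by (rule card_mono[OF assms(1)]) (use assms in auto)
  show ?thesis using 1 2 3 4 5 by linarith
qed

definition Nb :: "'a set \<Rightarrow> 'a set set \<Rightarrow> 'a set \<Rightarrow> 'a set" where
  "Nb V E T = {v\<in>V. v \<notin> T \<and> insert v T \<in> E}"

definition KT :: "'a set \<Rightarrow> nat \<Rightarrow> 'a set set" where
  "KT V j = {T. T \<subseteq> V \<and> card T = j}"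

lemma card_KT: "finite V \<Longrightarrow> card (KT V j) = card V choose j"
  unfolding KT_def by (rule n_subsets)

lemma finite_KT: "finite V \<Longrightarrow> finite (KT V j)"
  unfolding KT_def by (rule finite_subset[of _ "Pow V"]) auto

lemma Nb_sub: "Nb V E T \<subseteq> V" unfolding Nb_def by auto

lemma codeg_le_Nb:
  assumes "kgraph k V E" "T \<in> KT V (k - 1)" "k \<ge> 1"
  shows "min_codegree k V E \<le> card (Nb V E T)"
proof -
  have fV: "finite V" using assms(1) unfolding kgraph_def by auto
  have fin: "finite {card {e\<in>E. S \<subseteq> e} | S. S \<subseteq> V \<and> card S = k - 1}"
  proof -
    have "{card {e\<in>E. S \<subseteq> e} | S. S \<subseteq> V \<and> card S = k - 1} = (\<lambda>S. card {e\<in>E. S \<subseteq> e}) ` KT V (k-1)"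
      unfolding KT_def by auto
    thus ?thesis using finite_KT[OF fV] by simp
  qed
  have "min_codegree k V E \<le> card {e\<in>E. T \<subseteq> e}"
    unfolding min_codegree_def using assms(2) unfolding KT_def
    by (intro Min_le[OF fin]) auto
  also have "\<dots> \<le> card (Nb V E T)"
  proof -
    have "{e\<in>E. T \<subseteq> e} \<subseteq> (\<lambda>v. insert v T) ` Nb V E T"
    proof
      fix e assume e: "e \<in> {e\<in>E. T \<subseteq> e}"
      have ce: "card e = k" "e \<subseteq> V" using e assms(1) unfolding kgraph_def by auto
      have fe: "finite e" using ce fV finite_subset by auto
      have cT: "card T = k - 1" using assms(2) unfolding KT_def by auto
      have "T \<noteq> e" using cT ce assms(3) by auto
      then obtain v where v: "v \<in> e" "v \<notin> T" using e by blast
      have sub: "insert v T \<subseteq> e" using v e by auto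
      have fT: "finite T" using fe e finite_subset by auto
      have "card (insert v T) = k" using v fT cT assms(3) by simp
      hence eq: "insert v T = e" using card_subset_eq[OF fe sub] ce by simp
      have "v \<in> Nb V E T" unfolding Nb_def using v ce e eq by auto
      thus "e \<in> (\<lambda>v. insert v T) ` Nb V E T" using eq by auto
    qed
    moreover have "finite (Nb V E T)" using fV Nb_sub finite_subset by metis
    ultimately show ?thesis using card_image_le order_trans card_mono by (metis finite_imageI)
  qed
  finally show ?thesis .
qed

definition WitT :: "'a set \<Rightarrow> 'a set set \<Rightarrow> 'a set \<Rightarrow> 'a set \<Rightarrow> nat \<Rightarrow> ('a set \<times> 'a \<times> 'a) set" where
  "WitT V E A B k = (SIGMA T:KT V (k-1). (A \<inter> Nb V E T) \<times> (B \<inter> Nb V E T))"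

lemma dia_le:
  assumes kg: "kgraph k V E" and k1: "k \<ge> 1"
  shows "card (diamonds k E a b) \<le> card V choose (k - 1)"
proof -
  have fV: "finite V" using kg unfolding kgraph_def by auto
  have key: "e = insert a (e \<inter> f) \<and> f = insert b (e \<inter> f)" if "(e,f) \<in> diamonds k E a b" for e f
  proof -
    have h: "e \<in> E" "f \<in> E" "card (e \<inter> f) = k - 1" "a \<in> e - f" "b \<in> f - e" using that unfolding diamonds_def by auto
    have ce: "card e = k" "card f = k" "e \<subseteq> V" "f \<subseteq> V" using h kg unfolding kgraph_def by auto
    have fe: "finite e" "finite f" using ce fV finite_subset by auto
    have fi: "finite (e \<inter> f)" using fe by auto
    have "card (insert a (e \<inter> f)) = k" using h fi k1 by simp
    hence 1: "insert a (e \<inter> f) = e" using card_subset_eq[OF fe(1), of "insert a (e \<inter> f)"] h ce by auto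
    have "card (insert b (e \<inter> f)) = k" using h fi k1 by simp
    hence 2: "insert b (e \<inter> f) = f" using card_subset_eq[OF fe(2), of "insert b (e \<inter> f)"] h ce by auto
    show ?thesis using 1 2 by simp
  qed
  have inj: "inj_on (\<lambda>(e,f). e \<inter> f) (diamonds k E a b)"
  proof (rule inj_onI)
    fix p q assume p: "p \<in> diamonds k E a b" and q: "q \<in> diamonds k E a b"
      and eq: "(\<lambda>(e,f). e \<inter> f) p = (\<lambda>(e,f). e \<inter> f) q"
    obtain e f where pe: "p = (e,f)" by (cases p)
    obtain e' f' where qe: "q = (e',f')" by (cases q)
    show "p = q" using key[of e f] key[of e' f'] p q eq pe qe by (metis case_prod_conv)
  qed
  have sub: "(\<lambda>(e,f). e \<inter> f) ` diamonds k E a b \<subseteq> KT V (k-1)"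
  proof
    fix T assume "T \<in> (\<lambda>(e,f). e \<inter> f) ` diamonds k E a b"
    then obtain e f where ef: "(e,f) \<in> diamonds k E a b" "T = e \<inter> f" by auto
    have "e \<in> E" "card (e \<inter> f) = k - 1" using ef unfolding diamonds_def by auto
    thus "T \<in> KT V (k-1)" using ef kg unfolding KT_def kgraph_def by auto
  qed
  have "card (diamonds k E a b) = card ((\<lambda>(e,f). e \<inter> f) ` diamonds k E a b)"
    using card_image[OF inj] by simp
  also have "\<dots> \<le> card (KT V (k-1))" by (rule card_mono[OF finite_KT[OF fV] sub])
  also have "\<dots> = card V choose (k-1)" using card_KT[OF fV] .
  finally show ?thesis .
qed

lemma finite_dia:
  assumes kg: "kgraph k V E"
  shows "finite (diamonds k E a b)"
proof -
  have fV: "finite V" using kg unfolding kgraph_def by auto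
  have "E \<subseteq> Pow V" using kg unfolding kgraph_def by auto
  hence fE: "finite E" using fV finite_subset by blast
  have "diamonds k E a b \<subseteq> E \<times> E" unfolding diamonds_def by auto
  thus ?thesis using fE finite_subset by blast
qed

lemma witT_upper:
  assumes kg: "kgraph k V E" and k1: "k \<ge> 1" and AB: "A \<union> B = V" "A \<inter> B = {}"
    and sep: "mu_separation k \<gamma> \<mu> V E A B" and mg: "\<mu> \<le> \<gamma>" and g0: "0 \<le> \<gamma>"
  shows "real (card (WitT V E A B k)) \<le> 2 * \<gamma> * real (card A) * real (card B) * real (card V choose (k-1))"
proof -
  define C where "C = real (card V choose (k-1))"
  have fV: "finite V" using kg unfolding kgraph_def by auto
  have fA: "finite A" "finite B" using AB fV by auto
  define Dg where "Dg = (SIGMA p:A\<times>B. diamonds k E (fst p) (snd p))"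
  define \<iota> where "\<iota> = (\<lambda>(T::'a set,u::'a,w::'a). ((u,w),(insert u T, insert w T)))"
  have inj: "inj_on \<iota> (WitT V E A B k)"
  proof (rule inj_onI)
    fix x y assume x: "x \<in> WitT V E A B k" and y: "y \<in> WitT V E A B k" and eq: "\<iota> x = \<iota> y"
    obtain T u w where xe: "x = (T,u,w)" by (cases x) auto
    obtain T' u' w' where ye: "y = (T',u',w')" by (cases y) auto
    have h: "u \<in> A" "w \<in> B" "u \<notin> T" "w \<notin> T" "u' \<notin> T'" "w' \<notin> T'" "u' \<in> A" "w' \<in> B"
      using x y xe ye unfolding WitT_def Nb_def by auto
    have uw: "u = u'" "w = w'" "insert u T = insert u' T'" "insert w T = insert w' T'"
      using eq xe ye unfolding \<iota>_def by auto
    have "u \<noteq> w" using h AB by auto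
    have "T = insert u T \<inter> insert w T - {u, w}" using h by auto
    also have "\<dots> = insert u' T' \<inter> insert w' T' - {u', w'}" using uw by simp
    also have "\<dots> = T'" using h by auto
    finally show "x = y" using xe ye uw by simp
  qed
  have sub: "\<iota> ` WitT V E A B k \<subseteq> Dg"
  proof
    fix z assume "z \<in> \<iota> ` WitT V E A B k"
    then obtain T u w where t: "(T,u,w) \<in> WitT V E A B k" "z = \<iota> (T,u,w)" by auto
    have h: "T \<subseteq> V" "card T = k - 1" "u \<in> A" "w \<in> B" "u \<notin> T" "w \<notin> T" "insert u T \<in> E" "insert w T \<in> E"
      using t unfolding WitT_def Nb_def KT_def by auto
    have uw: "u \<noteq> w" using h AB by auto
    have "insert u T \<inter> insert w T = T" using h uw by auto
    hence "(insert u T, insert w T) \<in> diamonds k E u w"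
      unfolding diamonds_def using h uw by auto
    thus "z \<in> Dg" using t h unfolding Dg_def \<iota>_def by auto
  qed
  have fD: "finite Dg" unfolding Dg_def using fA finite_dia[OF kg] by auto
  have "card (WitT V E A B k) \<le> card Dg"
    using card_image[OF inj] card_mono[OF fD sub] by simp
  also have "card Dg = (\<Sum>p\<in>A\<times>B. card (diamonds k E (fst p) (snd p)))"
    unfolding Dg_def using fA finite_dia[OF kg] by (simp add: card_SigmaI)
  finally have 1: "real (card (WitT V E A B k)) \<le> real (\<Sum>p\<in>A\<times>B. card (diamonds k E (fst p) (snd p)))"
    by (simp only: of_nat_le_iff)
  have 1: "real (card (WitT V E A B k)) \<le> (\<Sum>p\<in>A\<times>B. real (card (diamonds k E (fst p) (snd p))))"
    using 1 by (simp only: of_nat_sum)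
  define P where "P = {p\<in>A\<times>B. diamond_adj k \<gamma> V E (fst p) (snd p)}"
  have bd: "real (card (diamonds k E (fst p) (snd p))) \<le> (if p \<in> P then C else 0) + \<gamma> * C"
    if p: "p \<in> A \<times> B" for p
  proof (cases "p \<in> P")
    case True
    have "real (card (diamonds k E (fst p) (snd p))) \<le> C"
      using dia_le[OF kg k1, of "fst p" "snd p"] unfolding C_def by (simp only: of_nat_le_iff)
    moreover have "\<gamma> * C \<ge> 0" unfolding C_def using g0 by simp
    ultimately show ?thesis using True by simp
  next
    case False
    have "fst p \<in> V" "snd p \<in> V" "fst p \<noteq> snd p" using p AB by auto
    hence "\<not> (\<gamma> * C \<le> real (card (diamonds k E (fst p) (snd p))))"
      using False p unfolding P_def diamond_adj_def C_def by auto
    thus ?thesis using False by simp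
  qed
  have "(\<Sum>p\<in>A\<times>B. real (card (diamonds k E (fst p) (snd p)))) \<le> (\<Sum>p\<in>A\<times>B. (if p \<in> P then C else 0) + \<gamma> * C)"
    by (rule sum_mono) (use bd in auto)
  also have "\<dots> = (\<Sum>p\<in>A\<times>B. (if p \<in> P then C else 0)) + real (card A) * real (card B) * \<gamma> * C"
    by (simp add: sum.distrib card_cartesian_product)
  also have "(\<Sum>p\<in>A\<times>B. (if p \<in> P then C else 0)) = real (card P) * C"
  proof -
    have "P \<subseteq> A \<times> B" unfolding P_def by auto
    hence "(\<Sum>p\<in>A\<times>B. (if p \<in> P then C else 0)) = (\<Sum>p\<in>P. C)"
      using fA by (simp add: sum.If_cases Int_absorb1)
    thus ?thesis by simp
  qed
  finally have 2: "real (card (WitT V E A B k)) \<le> real (card P) * C + real (card A) * real (card B) * \<gamma> * C"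
    using 1 by linarith
  have "P = {(a, b). a \<in> A \<and> b \<in> B \<and> diamond_adj k \<gamma> V E a b}" unfolding P_def by auto
  hence cP: "real (card P) < \<mu> * real (card A) * real (card B)" using sep unfolding mu_separation_def by simp
  have C0: "C \<ge> 0" unfolding C_def by simp
  have "real (card P) * C \<le> \<mu> * real (card A) * real (card B) * C" using cP C0 by (simp add: mult_right_mono)
  also have "\<dots> \<le> \<gamma> * real (card A) * real (card B) * C" using mg C0 by (simp add: mult_right_mono)
  finally show ?thesis using 2 unfolding C_def by (simp add: algebra_simps)
qed

lemma witT_swap: "card (WitT V E B A k) = card (WitT V E A B k)"
proof -
  have "WitT V E B A k = (\<lambda>(T,u,w). (T,w,u)) ` WitT V E A B k"
    unfolding WitT_def by (auto simp: image_iff) 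
  moreover have "inj_on (\<lambda>(T::'a set,u::'a,w::'a). (T,w,u)) (WitT V E A B k)"
    by (auto simp: inj_on_def)
  ultimately show ?thesis by (simp add: card_image)
qed

lemma finite_Nb: "finite V \<Longrightarrow> finite (Nb V E T)"
  using Nb_sub finite_subset by metis

lemma finite_WitT: "finite V \<Longrightarrow> finite (WitT V E A B k)"
  unfolding WitT_def using finite_KT by (auto intro!: finite_SigmaI simp: finite_Nb)

lemma size_lemma:
  assumes kg: "kgraph k V E" and k3: "k \<ge> 3" and AB: "A \<union> B = V" "A \<inter> B = {}" and Ane: "A \<noteq> {}"
   and cod: "\<And>T. T \<in> KT V (k-1) \<Longrightarrow> d0 \<le> real (card (Nb V E T))"
   and d0: "real (card V) / 3 \<le> d0"
   and up: "real (card (WitT V E A B k)) \<le> 2*\<gamma>*real (card A)*real (card B)*real (card V choose (k-1))"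
   and g: "\<gamma> < 1/36" and gnn: "0 \<le> \<gamma>" and n: "card V \<ge> k"
  shows "real (card V) / 6 < real (card A)"
proof (rule ccontr)
  assume "\<not> ?thesis"
  hence small: "real (card A) \<le> real (card V) / 6" by simp
  define N where "N = real (card V)"
  define a where "a = real (card A)"
  define c' where "c' = real ((card V - 1) choose (k - 2))"
  define C where "C = real (card V choose (k - 1))"
  have fV: "finite V" using kg unfolding kgraph_def by auto
  have fA: "finite A" "finite B" using AB fV by auto
  define Q where "Q = (SIGMA T:KT V (k-1). A \<inter> Nb V E T)"
  define Dm where "Dm = (SIGMA u:A. SIGMA R:KT (V - {u}) (k-2). Nb V E (insert u R))"
  have fQ: "finite Q" unfolding Q_def using finite_KT[OF fV] finite_Nb[OF fV] by auto
  have fDm: "finite Dm" unfolding Dm_def using fA fV finite_KT[of "V - {_}"]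
    by (auto intro!: finite_SigmaI simp: finite_Nb)
  have d0pos: "0 \<le> d0" proof -
    have "0 \<le> real (card V) / 3" by simp
    thus ?thesis using d0 by linarith
  qed
  have "a * (c' * d0) \<le> real (card Dm)"
    unfolding Dm_def
  proof (rule sigma_lb)
    show "finite A" using fA by simp
    show "0 \<le> c' * d0" unfolding c'_def using d0pos by simp
    show "a \<le> real (card A)" unfolding a_def by simp
    show "0 \<le> a" unfolding a_def by simp
    fix u assume u: "u \<in> A"
    show "finite (SIGMA R:KT (V - {u}) (k - 2). Nb V E (insert u R))"
      using fV finite_KT[of "V - {u}"] by (auto intro!: finite_SigmaI simp: finite_Nb)
    show "c' * d0 \<le> real (card (SIGMA R:KT (V - {u}) (k - 2). Nb V E (insert u R)))"
    proof (rule sigma_lb)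
      show "finite (KT (V - {u}) (k - 2))" using fV finite_KT by blast
      show "0 \<le> d0" by (rule d0pos)
      have "card (KT (V - {u}) (k - 2)) = (card V - 1) choose (k-2)"
        using card_KT[of "V - {u}"] fV u AB by auto
      thus "c' \<le> real (card (KT (V - {u}) (k - 2)))" unfolding c'_def by simp
      show "0 \<le> c'" unfolding c'_def by simp
      fix R assume R: "R \<in> KT (V - {u}) (k - 2)"
      show "finite (Nb V E (insert u R))" using fV Nb_sub finite_subset by metis
      have "finite R" using R fV unfolding KT_def by (auto intro: finite_subset)
      moreover have "u \<notin> R" using R unfolding KT_def by auto
      ultimately have "card (insert u R) = k - 1" using R k3 unfolding KT_def by simp
      hence "insert u R \<in> KT V (k-1)" using R u AB unfolding KT_def by auto
      thus "d0 \<le> real (card (Nb V E (insert u R)))" by (rule cod)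
    qed
  qed
  define g where "g = (\<lambda>(u::'a, R::'a set, v::'a). (insert v R, u))"
  have gsub: "g ` Dm \<subseteq> Q"
  proof
    fix z assume "z \<in> g ` Dm"
    then obtain u R v where x: "(u,R,v) \<in> Dm" "z = (insert v R, u)" unfolding g_def by auto
    have h: "u \<in> A" "R \<subseteq> V - {u}" "card R = k - 2" "v \<in> V" "v \<notin> insert u R" "insert v (insert u R) \<in> E"
      using x unfolding Dm_def KT_def Nb_def by auto
    have "finite R" using h fV by (auto intro: finite_subset)
    hence "insert v R \<in> KT V (k-1)" using h k3 unfolding KT_def by auto
    moreover have "u \<in> Nb V E (insert v R)" unfolding Nb_def using h AB by (auto simp: insert_commute)
    ultimately show "z \<in> Q" unfolding Q_def using x h by auto
  qed
  have "card Dm \<le> (k-1) * card (g ` Dm)"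
  proof (rule card_fiber_bound[OF fDm])
    fix y assume "y \<in> g ` Dm"
    then obtain T u where y: "y = (T,u)" "T \<in> KT V (k-1)" using gsub unfolding Q_def by auto
    have "{x \<in> Dm. g x = y} \<subseteq> (\<lambda>v. (u, T - {v}, v)) ` T"
    proof
      fix x assume x: "x \<in> {x \<in> Dm. g x = y}"
      obtain u' R v where xe: "x = (u',R,v)" by (cases x) auto
      have h: "v \<notin> R" "insert v R = T" "u' = u" using x xe y unfolding Dm_def Nb_def g_def by auto
      hence "R = T - {v}" by auto
      thus "x \<in> (\<lambda>v. (u, T - {v}, v)) ` T" using xe h by auto
    qed
    moreover have "finite T" using y fV unfolding KT_def by (auto intro: finite_subset)
    ultimately have "card {x \<in> Dm. g x = y} \<le> card T"
      by (meson card_image_le card_mono finite_imageI order_trans)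
    thus "card {x \<in> Dm. g x = y} \<le> k - 1" using y unfolding KT_def by simp
  qed
  also have "\<dots> \<le> (k-1) * card Q" using card_mono[OF fQ gsub] by simp
  finally have fib: "real (card Dm) \<le> real (k-1) * real (card Q)" by (simp only: of_nat_mult[symmetric] of_nat_le_iff)
  have "real (card (WitT V E A B k)) = (\<Sum>T\<in>KT V (k-1). real (card (A \<inter> Nb V E T)) * real (card (B \<inter> Nb V E T)))"
  proof -
    have "card (WitT V E A B k) = (\<Sum>T\<in>KT V (k-1). card (A \<inter> Nb V E T) * card (B \<inter> Nb V E T))"
      unfolding WitT_def using finite_KT[OF fV] fA by (simp add: card_cartesian_product)
    thus ?thesis by (simp add: of_nat_sum)
  qed
  also have "\<dots> \<ge> (\<Sum>T\<in>KT V (k-1). real (card (A \<inter> Nb V E T)) * (N/6))"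
  proof (rule sum_mono)
    fix T assume T: "T \<in> KT V (k-1)"
    have "card (Nb V E T) \<le> card (A \<inter> Nb V E T) + card (B \<inter> Nb V E T)"
    proof -
      have "Nb V E T = (A \<inter> Nb V E T) \<union> (B \<inter> Nb V E T)" using Nb_sub[of V E T] AB by blast
      thus ?thesis by (metis card_Un_le)
    qed
    moreover have "card (A \<inter> Nb V E T) \<le> card A" using fA by (simp add: card_mono)
    ultimately have "d0 - a \<le> real (card (B \<inter> Nb V E T))" using cod[OF T] unfolding a_def by linarith
    hence "N/6 \<le> real (card (B \<inter> Nb V E T))" using d0 small unfolding N_def a_def by linarith
    thus "real (card (A \<inter> Nb V E T)) * (N/6) \<le> real (card (A \<inter> Nb V E T)) * real (card (B \<inter> Nb V E T))"
      by (rule mult_left_mono) simp_all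
  qed
  finally have wl: "(N/6) * real (card Q) \<le> real (card (WitT V E A B k))"
  proof -
    assume h: "(\<Sum>T\<in>KT V (k-1). real (card (A \<inter> Nb V E T)) * (N/6)) \<le> real (card (WitT V E A B k))"
    have "real (card Q) = (\<Sum>T\<in>KT V (k-1). real (card (A \<inter> Nb V E T)))"
      unfolding Q_def using finite_KT[OF fV] fA by (simp add: of_nat_sum)
    moreover have "(\<Sum>T\<in>KT V (k-1). real (card (A \<inter> Nb V E T)) * (N/6)) = (\<Sum>T\<in>KT V (k-1). real (card (A \<inter> Nb V E T))) * (N/6)"
      by (rule sum_distrib_right[symmetric])
    ultimately have "(\<Sum>T\<in>KT V (k-1). real (card (A \<inter> Nb V E T)) * (N/6)) = (N/6) * real (card Q)"
      by simp
    thus ?thesis using h by simp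
  qed
  have binom: "real (k-1) * C = N * c'"
  proof -
    have "(k-1) * (card V choose (k-1)) = card V * ((card V - 1) choose (k - 1 - 1))"
      using times_binomial_minus1_eq[of "k-1" "card V"] k3 by simp
    moreover have "k - 1 - 1 = k - 2" by simp
    ultimately show ?thesis unfolding C_def N_def c'_def by (metis of_nat_mult)
  qed
  have Npos: "N > 0" unfolding N_def using n k3 by simp
  have apos: "a > 0" unfolding a_def using Ane fA by (simp add: card_gt_0_iff)
  have cpos: "c' > 0" unfolding c'_def using n k3 by simp
  have bB: "real (card B) \<le> N" unfolding N_def using AB fV card_mono[of V B] by auto
  define P where "P = a * c' * N * N"
  have Ppos: "P > 0" unfolding P_def using Npos apos cpos by simp
  have "P / 18 = (N/6) * a * c' * (N/3)" unfolding P_def by simp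
  also have "\<dots> \<le> (N/6) * a * c' * d0" using d0 Npos apos cpos unfolding N_def
    by (intro mult_left_mono) auto
  also have "\<dots> = (N/6) * (a * (c' * d0))" by simp
  also have "\<dots> \<le> (N/6) * (real (k-1) * real (card Q))"
    using \<open>a * (c' * d0) \<le> real (card Dm)\<close> fib Npos by (intro mult_left_mono) auto
  also have "\<dots> = real (k-1) * ((N/6) * real (card Q))" by simp
  also have "\<dots> \<le> real (k-1) * real (card (WitT V E A B k))" using wl by (intro mult_left_mono) auto
  also have "\<dots> \<le> real (k-1) * (2*\<gamma>*a*real (card B)*C)" using up unfolding a_def C_def by (intro mult_left_mono) auto
  also have "\<dots> \<le> real (k-1) * (2*\<gamma>*a*N*C)"
    using bB gnn apos unfolding C_def by (intro mult_left_mono mult_right_mono) auto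
  also have "\<dots> = 2*\<gamma>*a*N*(real (k-1) * C)" by simp
  also have "\<dots> = 2 * \<gamma> * P" unfolding binom P_def by simp
  finally have "P/18 \<le> 2*\<gamma>*P" .
  hence "(1/18) * P \<le> (2*\<gamma>) * P" by simp
  hence "1/18 \<le> 2*\<gamma>" using Ppos mult_right_le_imp_le by blast
  thus False using g by simp
qed

definition N2 :: "'a set \<Rightarrow> 'a set set \<Rightarrow> 'a set \<Rightarrow> 'a \<Rightarrow> 'a \<Rightarrow> 'a set" where
  "N2 V E S p q = Nb V E (insert p (insert q S))"

lemma N2_iff: "c \<in> N2 V E S a b \<longleftrightarrow> c \<in> V \<and> c \<notin> S \<and> c \<noteq> a \<and> c \<noteq> b \<and> insert c (insert a (insert b S)) \<in> E"
  unfolding N2_def Nb_def by auto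

lemma N2_comm: "N2 V E S a b = N2 V E S b a"
  unfolding N2_def by (simp add: insert_commute)

lemma N2_rot:
  assumes "c \<in> N2 V E S a b" "b \<in> V" "b \<notin> S" "a \<noteq> b"
  shows "b \<in> N2 V E S a c"
proof -
  have "insert c (insert a (insert b S)) = insert b (insert a (insert c S))" by auto
  thus ?thesis using assms unfolding N2_iff by metis
qed

lemma N2_sub: "N2 V E S a b \<subseteq> V" unfolding N2_def using Nb_sub by metis

lemma finite_N2: "finite V \<Longrightarrow> finite (N2 V E S a b)" unfolding N2_def by (rule finite_Nb)

definition WitS :: "'a set \<Rightarrow> 'a set set \<Rightarrow> 'a set \<Rightarrow> 'a set \<Rightarrow> nat \<Rightarrow> ('a set \<times> 'a \<times> 'a \<times> 'a \<times> 'a) set" where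
  "WitS V E A B k = {(S,p1,p2,u,w). S \<in> KT V (k-3) \<and> p1 \<in> V - S \<and> p2 \<in> V - S \<and> p1 \<noteq> p2 \<and>
      u \<in> A \<and> u \<in> N2 V E S p1 p2 \<and> w \<in> B \<and> w \<in> N2 V E S p1 p2}"

lemma kt2:
  assumes "S \<in> KT V (k-3)" "p \<in> V" "q \<in> V" "p \<notin> S" "q \<notin> S" "p \<noteq> q" "k \<ge> 3" "finite V"
  shows "insert p (insert q S) \<in> KT V (k-1)"
proof -
  have "finite S" using assms unfolding KT_def by (auto intro: finite_subset)
  thus ?thesis using assms unfolding KT_def by auto
qed

lemma witS_le:
  assumes kg: "kgraph k V E" and k3: "k \<ge> 3"
  shows "card (WitS V E A B k) \<le> (k-1)*(k-1) * card (WitT V E A B k)"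
proof -
  have fV: "finite V" using kg unfolding kgraph_def by auto
  have fW: "finite (WitS V E A B k)"
  proof -
    have "WitS V E A B k \<subseteq> Pow V \<times> V \<times> V \<times> V \<times> V"
      unfolding WitS_def KT_def N2_iff by auto
    moreover have "finite (Pow V \<times> V \<times> V \<times> V \<times> V)" using fV by auto
    ultimately show ?thesis by (rule finite_subset)
  qed
  define h where "h = (\<lambda>(S::'a set,p1::'a,p2::'a,u::'a,w::'a). (insert p1 (insert p2 S), u, w))"
  have hsub: "h ` WitS V E A B k \<subseteq> WitT V E A B k"
  proof
    fix z assume "z \<in> h ` WitS V E A B k"
    then obtain S p1 p2 u w where s: "(S,p1,p2,u,w) \<in> WitS V E A B k" "z = (insert p1 (insert p2 S), u, w)"
      unfolding h_def by auto
    have ss: "S \<in> KT V (k-3)" "p1 \<in> V" "p2 \<in> V" "p1 \<notin> S" "p2 \<notin> S" "p1 \<noteq> p2"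
      using s(1) unfolding WitS_def by auto
    have T: "insert p1 (insert p2 S) \<in> KT V (k-1)" using kt2[OF ss k3 fV] .
    show "z \<in> WitT V E A B k" using s T unfolding WitS_def WitT_def N2_def by auto
  qed
  have "card (WitS V E A B k) \<le> ((k-1)*(k-1)) * card (h ` WitS V E A B k)"
  proof (rule card_fiber_bound[OF fW])
    fix y assume "y \<in> h ` WitS V E A B k"
    then obtain T u w where y: "y = (T,u,w)" "T \<in> KT V (k-1)" using hsub unfolding WitT_def by auto
    have "{x \<in> WitS V E A B k. h x = y} \<subseteq> (\<lambda>(p1,p2). (T - {p1,p2}, p1, p2, u, w)) ` (T \<times> T)"
    proof
      fix x assume x: "x \<in> {x \<in> WitS V E A B k. h x = y}"
      obtain S p1 p2 u' w' where xe: "x = (S,p1,p2,u',w')" by (cases x) auto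
      have h1: "p1 \<notin> S" "p2 \<notin> S" "insert p1 (insert p2 S) = T" "u' = u" "w' = w"
        using x xe y unfolding WitS_def h_def by auto
      hence "S = T - {p1,p2}" by auto
      moreover have "(p1,p2) \<in> T \<times> T" using h1 by auto
      ultimately show "x \<in> (\<lambda>(p1,p2). (T - {p1,p2}, p1, p2, u, w)) ` (T \<times> T)"
        using xe h1 by (auto intro!: image_eqI[where x="(p1,p2)"])
    qed
    moreover have "finite T" using y fV unfolding KT_def by (auto intro: finite_subset)
    ultimately have "card {x \<in> WitS V E A B k. h x = y} \<le> card ((\<lambda>(p1,p2). (T - {p1,p2}, p1, p2, u, w)) ` (T \<times> T))"
      by (intro card_mono) auto
    also have "\<dots> \<le> card (T \<times> T)" by (rule card_image_le) (use \<open>finite T\<close> in auto)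
    finally have "card {x \<in> WitS V E A B k. h x = y} \<le> card (T \<times> T)" .
    thus "card {x \<in> WitS V E A B k. h x = y} \<le> (k-1)*(k-1)" using y unfolding KT_def by (simp add: card_cartesian_product)
  qed
  also have "\<dots> \<le> ((k-1)*(k-1)) * card (WitT V E A B k)"
    using card_mono[OF finite_WitT[OF fV] hsub] by simp
  finally show ?thesis .
qed

definition Ysets :: "'a set \<Rightarrow> 'a \<Rightarrow> 'a \<Rightarrow> 'a \<Rightarrow> 'a \<Rightarrow> 'a \<Rightarrow> 'a set set" where
  "Ysets S d c x y z = {S \<union> {d,c,x}, S \<union> {d,c,y}, S \<union> {x,y,z}}"

lemma bal_ok:
  assumes AB: "A \<union> B = V" "A \<inter> B = {}" and S: "S \<in> KT V (k-3)"
    and dc: "d \<in> A" "c \<in> A" "d \<notin> S" "c \<notin> S" "d \<noteq> c"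
    and xyz: "x \<in> B" "y \<in> B" "z \<in> B" "x \<noteq> y"
    and N: "x \<in> N2 V E S d c" "y \<in> N2 V E S d c" "z \<in> N2 V E S x y"
  shows "Ysets S d c x y z \<in> proto_balancers k V E A"
proof -
  have i: "x \<notin> S" "y \<notin> S" "z \<notin> S" "z \<noteq> x" "z \<noteq> y" "x \<in> V" "y \<in> V" "z \<in> V"
    "insert x (insert d (insert c S)) \<in> E" "insert y (insert d (insert c S)) \<in> E"
    "insert z (insert x (insert y S)) \<in> E" using N unfolding N2_iff by auto
  have ne: "x \<noteq> d" "x \<noteq> c" "y \<noteq> d" "y \<noteq> c" "z \<noteq> d" "z \<noteq> c" using dc xyz AB by auto
  have e1: "S \<union> {d,c,x} = insert x (insert d (insert c S))" by auto
  have e2: "S \<union> {d,c,y} = insert y (insert d (insert c S))" by auto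
  have e3: "S \<union> {x,y,z} = insert z (insert x (insert y S))" by auto
  have s1: "{d,c,x} \<inter> A = {d,c}" using dc xyz AB by auto
  have s2: "{d,c,y} \<inter> A = {d,c}" using dc xyz AB by auto
  have s3: "{d,c,x} \<inter> {d,c,y} = {d,c}" using i ne xyz by auto
  have s4: "{d,c,x} \<inter> {d,c,y} \<inter> A = {d,c}" using s3 dc by auto
  have s8: "{d,c} \<inter> A = {d,c}" using dc by auto
  have s5: "{x,y,z} \<inter> A = {}" using xyz AB by auto
  have s6: "{d,c,x} \<inter> {x,y,z} = {x}" using i ne xyz by auto
  have s7: "{d,c,y} \<inter> {x,y,z} = {y}" using i ne xyz by auto
  have SV: "S \<subseteq> V" "card S = k - 3" using S unfolding KT_def by auto
  have dcV: "d \<in> V" "c \<in> V" using dc AB by auto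
  have c1: "card {d,c,x} = 3" "card {d,c,y} = 3" "card {x,y,z} = 3" using ne dc i xyz by auto
  have sub: "{d,c,x} \<subseteq> V - S" "{d,c,y} \<subseteq> V - S" "{x,y,z} \<subseteq> V - S" using dcV dc i by auto
  have "is_proto_balancer k V E A S {d,c,x} {d,c,y} {x,y,z}"
    unfolding is_proto_balancer_def
    apply (intro conjI)
    using SV sub c1 i(9,10,11) apply (simp_all only: e1 e2 e3 s1 s2 s3 s4 s5 s6 s7 s8)
    using dc(5) by simp_all
  thus ?thesis unfolding proto_balancers_def Ysets_def by blast
qed

definition P3 :: "'a set \<Rightarrow> 'a set \<Rightarrow> 'a set \<Rightarrow> 'a set" where
  "P3 X Y Z = (X\<inter>Y) \<union> (X\<inter>Z) \<union> (Y\<inter>Z)"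

lemma finite_P3: "finite X \<Longrightarrow> finite Y \<Longrightarrow> finite (P3 X Y Z)" unfolding P3_def by auto

locale ctx =
  fixes k :: nat and V :: "'a set" and E :: "'a set set" and A B :: "'a set" and d0 :: real
  assumes kg: "kgraph k V E" and k3: "3 \<le> k" and AB: "A \<union> B = V" and disj: "A \<inter> B = {}"
    and cod: "\<And>T. T \<in> KT V (k-1) \<Longrightarrow> d0 \<le> real (card (Nb V E T))"
begin

lemma fV: "finite V" using kg unfolding kgraph_def by auto

lemma fA: "finite A" "finite B" using fV AB by auto

definition dd :: "'a \<Rightarrow> 'a \<Rightarrow> 'a \<Rightarrow> 'a" where "dd a b c = (if c \<in> A then a else b)"

definition Fset where
  "Fset = (SIGMA S:KT V (k-3). SIGMA a:A - S. SIGMA b:B - S. SIGMA c:N2 V E S a b.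
     SIGMA x:N2 V E S (dd a b c) c. SIGMA y:N2 V E S (dd a b c) c - {x}. SIGMA z:N2 V E S x y.
     P3 (N2 V E S x (dd a b c)) (N2 V E S x y) (N2 V E S x z))"

lemma cardN2:
  assumes "S \<in> KT V (k-3)" "p \<in> V" "q \<in> V" "p \<notin> S" "q \<notin> S" "p \<noteq> q"
  shows "d0 \<le> real (card (N2 V E S p q))"
  unfolding N2_def by (rule cod[OF kt2[OF assms k3 fV]])

lemma F_lb:
  assumes Ak: "real k \<le> real (card A)" and Bk: "real k \<le> real (card B)" and d1: "1 \<le> d0"
    and q0: "0 \<le> (3*d0 - real (card V))/2"
  shows "real (card V choose (k-3)) * ((real (card A) - real (k-3)) * ((real (card B) - real (k-3)) *
     (d0 * (d0 * ((d0 - 1) * (d0 * ((3*d0 - real (card V))/2))))))) \<le> real (card Fset)"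
  unfolding Fset_def
proof (rule sigma_lb)
  define q where "q = (3*d0 - real (card V))/2"
  have q0': "0 \<le> q" using q0 unfolding q_def .
  have d00: "0 \<le> d0" using d1 by simp
  note fin = finite_N2[OF fV] finite_P3 finite_KT[OF fV] fA
  show "finite (KT V (k - 3))" by (simp add: fin)
  show "real (card V choose (k - 3)) \<le> real (card (KT V (k - 3)))" using card_KT[OF fV] by simp
  show "0 \<le> real (card V choose (k - 3))" by simp
  show "0 \<le> (real (card A) - real (k-3)) * ((real (card B) - real (k-3)) *
     (d0 * (d0 * ((d0 - 1) * (d0 * ((3*d0 - real (card V))/2))))))"
    using Ak Bk d1 q0 by (intro mult_nonneg_nonneg) auto
  fix S assume S: "S \<in> KT V (k-3)"
  have fS: "finite S" using S fV unfolding KT_def by (auto intro: finite_subset)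
  show "finite (SIGMA a:A - S. SIGMA b:B - S. SIGMA c:N2 V E S a b.
     SIGMA x:N2 V E S (dd a b c) c. SIGMA y:N2 V E S (dd a b c) c - {x}. SIGMA z:N2 V E S x y.
     P3 (N2 V E S x (dd a b c)) (N2 V E S x y) (N2 V E S x z))"
    by (auto intro!: finite_SigmaI simp: fin)
  show "(real (card A) - real (k-3)) * ((real (card B) - real (k-3)) *
     (d0 * (d0 * ((d0 - 1) * (d0 * ((3*d0 - real (card V))/2)))))) \<le> real (card (SIGMA a:A - S. SIGMA b:B - S. SIGMA c:N2 V E S a b.
     SIGMA x:N2 V E S (dd a b c) c. SIGMA y:N2 V E S (dd a b c) c - {x}. SIGMA z:N2 V E S x y.
     P3 (N2 V E S x (dd a b c)) (N2 V E S x y) (N2 V E S x z)))"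
  proof (rule sigma_lb)
    show "finite (A - S)" by (simp add: fin)
    have "card A \<le> card ((A - S) \<union> S)" by (rule card_mono) (use fA fS in auto)
    also have "\<dots> \<le> card (A - S) + card S" by (rule card_Un_le)
    finally have "card A \<le> card (A - S) + card S" . 
    thus "real (card A) - real (k-3) \<le> real (card (A - S))" using S unfolding KT_def by simp
    show "0 \<le> real (card A) - real (k-3)" using Ak by simp
    show "0 \<le> (real (card B) - real (k-3)) * (d0 * (d0 * ((d0 - 1) * (d0 * ((3*d0 - real (card V))/2)))))"
      using Bk d1 q0 by (intro mult_nonneg_nonneg) auto
    fix a assume a: "a \<in> A - S"
    show "finite (SIGMA b:B - S. SIGMA c:N2 V E S a b.
     SIGMA x:N2 V E S (dd a b c) c. SIGMA y:N2 V E S (dd a b c) c - {x}. SIGMA z:N2 V E S x y.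
     P3 (N2 V E S x (dd a b c)) (N2 V E S x y) (N2 V E S x z))"
      by (auto intro!: finite_SigmaI simp: fin)
    show "(real (card B) - real (k-3)) * (d0 * (d0 * ((d0 - 1) * (d0 * ((3*d0 - real (card V))/2))))) \<le> real (card (SIGMA b:B - S. SIGMA c:N2 V E S a b.
     SIGMA x:N2 V E S (dd a b c) c. SIGMA y:N2 V E S (dd a b c) c - {x}. SIGMA z:N2 V E S x y.
     P3 (N2 V E S x (dd a b c)) (N2 V E S x y) (N2 V E S x z)))"
    proof (rule sigma_lb)
      show "finite (B - S)" by (simp add: fin)
      have "card B \<le> card ((B - S) \<union> S)" by (rule card_mono) (use fA fS in auto)
    also have "\<dots> \<le> card (B - S) + card S" by (rule card_Un_le)
    finally have "card B \<le> card (B - S) + card S" .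
      thus "real (card B) - real (k-3) \<le> real (card (B - S))" using S unfolding KT_def by simp
      show "0 \<le> real (card B) - real (k-3)" using Bk by simp
      show "0 \<le> d0 * (d0 * ((d0 - 1) * (d0 * ((3*d0 - real (card V))/2))))"
        using d1 q0 by (intro mult_nonneg_nonneg) auto
      fix b assume b: "b \<in> B - S"
      have abV: "a \<in> V" "b \<in> V" "a \<noteq> b" using a b AB disj by auto
      show "finite (SIGMA c:N2 V E S a b.
       SIGMA x:N2 V E S (dd a b c) c. SIGMA y:N2 V E S (dd a b c) c - {x}. SIGMA z:N2 V E S x y.
       P3 (N2 V E S x (dd a b c)) (N2 V E S x y) (N2 V E S x z))"
        by (auto intro!: finite_SigmaI simp: fin)
      show "d0 * (d0 * ((d0 - 1) * (d0 * ((3*d0 - real (card V))/2)))) \<le> real (card (SIGMA c:N2 V E S a b.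
       SIGMA x:N2 V E S (dd a b c) c. SIGMA y:N2 V E S (dd a b c) c - {x}. SIGMA z:N2 V E S x y.
       P3 (N2 V E S x (dd a b c)) (N2 V E S x y) (N2 V E S x z)))"
      proof (rule sigma_lb)
        show "finite (N2 V E S a b)" by (simp add: fin)
        show "d0 \<le> real (card (N2 V E S a b))" using cardN2[OF S] a b abV by auto
        show "0 \<le> d0" by (rule d00)
        show "0 \<le> d0 * ((d0 - 1) * (d0 * ((3*d0 - real (card V))/2)))"
          using d1 q0 by (intro mult_nonneg_nonneg) auto
        fix c assume c: "c \<in> N2 V E S a b"
        define d where "d = dd a b c"
        have cc: "c \<in> V" "c \<notin> S" "c \<noteq> a" "c \<noteq> b" using c unfolding N2_iff by auto
        have dd: "d \<in> V" "d \<notin> S" "d \<noteq> c" using abV a b cc unfolding d_def dd_def by auto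
        show "finite (SIGMA x:N2 V E S (dd a b c) c. SIGMA y:N2 V E S (dd a b c) c - {x}. SIGMA z:N2 V E S x y.
         P3 (N2 V E S x (dd a b c)) (N2 V E S x y) (N2 V E S x z))"
          by (auto intro!: finite_SigmaI simp: fin)
        show "d0 * ((d0 - 1) * (d0 * ((3*d0 - real (card V))/2))) \<le> real (card (SIGMA x:N2 V E S (dd a b c) c. SIGMA y:N2 V E S (dd a b c) c - {x}. SIGMA z:N2 V E S x y.
         P3 (N2 V E S x (dd a b c)) (N2 V E S x y) (N2 V E S x z)))"
          unfolding d_def[symmetric]
        proof (rule sigma_lb)
          show "finite (N2 V E S d c)" by (simp add: fin)
          show "d0 \<le> real (card (N2 V E S d c))" using cardN2[OF S] dd cc by auto
          show "0 \<le> d0" by (rule d00)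
          show "0 \<le> (d0 - 1) * (d0 * ((3*d0 - real (card V))/2))"
            using d1 q0 by (intro mult_nonneg_nonneg) auto
          fix x assume x: "x \<in> N2 V E S d c"
          have xx: "x \<in> V" "x \<notin> S" "x \<noteq> d" "x \<noteq> c" using x unfolding N2_iff by auto
          show "finite (SIGMA y:N2 V E S d c - {x}. SIGMA z:N2 V E S x y.
           P3 (N2 V E S x d) (N2 V E S x y) (N2 V E S x z))"
            by (auto intro!: finite_SigmaI simp: fin)
          show "(d0 - 1) * (d0 * ((3*d0 - real (card V))/2)) \<le> real (card (SIGMA y:N2 V E S d c - {x}. SIGMA z:N2 V E S x y.
           P3 (N2 V E S x d) (N2 V E S x y) (N2 V E S x z)))"
          proof (rule sigma_lb)
            show "finite (N2 V E S d c - {x})" by (simp add: fin)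
            have "card (N2 V E S d c - {x}) = card (N2 V E S d c) - 1" using x fin by simp
            moreover have "card (N2 V E S d c) \<ge> 1" using x fin by (simp add: Suc_le_eq card_gt_0_iff fin) (use x in blast)
            ultimately show "d0 - 1 \<le> real (card (N2 V E S d c - {x}))" using cardN2[OF S] dd cc by auto
            show "0 \<le> d0 - 1" using d1 by simp
            show "0 \<le> d0 * ((3*d0 - real (card V))/2)" using d1 q0 by (intro mult_nonneg_nonneg) auto
            fix y assume y: "y \<in> N2 V E S d c - {x}"
            have yy: "y \<in> V" "y \<notin> S" "y \<noteq> x" using y by (auto simp: N2_iff)
            show "finite (SIGMA z:N2 V E S x y. P3 (N2 V E S x d) (N2 V E S x y) (N2 V E S x z))"
              by (auto intro!: finite_SigmaI simp: fin)
            show "d0 * ((3*d0 - real (card V))/2) \<le> real (card (SIGMA z:N2 V E S x y. P3 (N2 V E S x d) (N2 V E S x y) (N2 V E S x z)))"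
            proof (rule sigma_lb)
              show "finite (N2 V E S x y)" by (simp add: fin)
              show "d0 \<le> real (card (N2 V E S x y))" using cardN2[OF S] xx yy by auto
              show "0 \<le> d0" by (rule d00)
              show "0 \<le> (3*d0 - real (card V))/2" by (rule q0)
              fix z assume z: "z \<in> N2 V E S x y"
              have zz: "z \<in> V" "z \<notin> S" "z \<noteq> x" using z unfolding N2_iff by auto
              show "finite (P3 (N2 V E S x d) (N2 V E S x y) (N2 V E S x z))" by (simp add: fin)
              have h1: "d0 \<le> real (card (N2 V E S x d))" using cardN2[OF S] xx dd by auto
              have h2: "d0 \<le> real (card (N2 V E S x y))" using cardN2[OF S] xx yy by auto
              have h3: "d0 \<le> real (card (N2 V E S x z))" using cardN2[OF S] xx zz by auto
              have "card (N2 V E S x d) + card (N2 V E S x y) + card (N2 V E S x z) \<le> card V + 2 * card (P3 (N2 V E S x d) (N2 V E S x y) (N2 V E S x z))"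
                unfolding P3_def by (rule p3_card[OF fV N2_sub N2_sub N2_sub])
              hence "real (card (N2 V E S x d) + card (N2 V E S x y) + card (N2 V E S x z)) \<le> real (card V + 2 * card (P3 (N2 V E S x d) (N2 V E S x y) (N2 V E S x z)))"
                by (simp only: of_nat_le_iff)
              hence "real (card (N2 V E S x d)) + real (card (N2 V E S x y)) + real (card (N2 V E S x z)) \<le> real (card V) + 2 * real (card (P3 (N2 V E S x d) (N2 V E S x y) (N2 V E S x z)))"
                by simp
              hence "3*d0 - real (card V) \<le> 2 * real (card (P3 (N2 V E S x d) (N2 V E S x y) (N2 V E S x z)))"
                using h1 h2 h3 by linarith
              thus "(3*d0 - real (card V))/2 \<le> real (card (P3 (N2 V E S x d) (N2 V E S x y) (N2 V E S x z)))"
                by simp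
            qed
          qed
        qed
      qed
    qed
  qed
qed

end

type_synonym 'a wtup = "('a set \<times> 'a \<times> 'a \<times> 'a \<times> 'a) \<times> 'a \<times> 'a \<times> 'a"
type_synonym 'a ctup = "'a set \<times> 'a \<times> 'a \<times> 'a \<times> 'a \<times> 'a \<times> 'a \<times> 'a"

definition H1 :: "'a wtup \<Rightarrow> 'a ctup" where "H1 = (\<lambda>((S,p1,p2,u,w),(r1,r2,r3)). (S,p1,w,p2,u,r1,r2,r3))"
definition H2 :: "'a wtup \<Rightarrow> 'a ctup" where "H2 = (\<lambda>((S,p1,p2,u,w),(r1,r2,r3)). (S,p1,w,p2,r1,u,r2,r3))"
definition H4 :: "'a wtup \<Rightarrow> 'a ctup" where "H4 = (\<lambda>((S,p1,p2,u,w),(r1,r2,r3)). (S,u,r1,r2,p1,w,r3,p2))"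
definition H5 :: "'a wtup \<Rightarrow> 'a ctup" where "H5 = (\<lambda>((S,p1,p2,u,w),(r1,r2,r3)). (S,p2,r1,u,p1,r2,r3,w))"
definition H6 :: "'a wtup \<Rightarrow> 'a ctup" where "H6 = (\<lambda>((S,p1,p2,u,w),(r1,r2,r3)). (S,r1,r2,r3,p1,w,p2,u))"
definition H8 :: "'a wtup \<Rightarrow> 'a ctup" where "H8 = (\<lambda>((S,p1,p2,u,w),(r1,r2,r3)). (S,r1,r2,r3,p1,p2,u,w))"
definition G1 :: "'a wtup \<Rightarrow> 'a ctup" where "G1 = (\<lambda>((S,p1,p2,u,w),(r1,r2,r3)). (S,u,p1,p2,w,r1,r2,r3))"
definition G2 :: "'a wtup \<Rightarrow> 'a ctup" where "G2 = (\<lambda>((S,p1,p2,u,w),(r1,r2,r3)). (S,u,p1,p2,r1,w,r2,r3))"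
definition G4 :: "'a wtup \<Rightarrow> 'a ctup" where "G4 = (\<lambda>((S,p1,p2,u,w),(r1,r2,r3)). (S,r1,w,r2,p1,u,r3,p2))"
definition G5 :: "'a wtup \<Rightarrow> 'a ctup" where "G5 = (\<lambda>((S,p1,p2,u,w),(r1,r2,r3)). (S,r1,p2,w,p1,r2,r3,u))"
definition G6 :: "'a wtup \<Rightarrow> 'a ctup" where "G6 = (\<lambda>((S,p1,p2,u,w),(r1,r2,r3)). (S,r1,r2,r3,p1,u,p2,w))"
definition G8 :: "'a wtup \<Rightarrow> 'a ctup" where "G8 = (\<lambda>((S,p1,p2,u,w),(r1,r2,r3)). (S,r1,r2,r3,p1,p2,w,u))"

lemma imgI: "t \<in> D \<Longrightarrow> f t = s \<Longrightarrow> s \<in> f ` D" by auto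

context ctx
begin

definition Dom where "Dom = WitS V E A B k \<times> V \<times> V \<times> V"

definition Ims where "Ims = H1 ` Dom \<union> H2 ` Dom \<union> H4 ` Dom \<union> H5 ` Dom \<union> H6 ` Dom \<union> H8 ` Dom \<union>
   G1 ` Dom \<union> G2 ` Dom \<union> G4 ` Dom \<union> G5 ` Dom \<union> G6 ` Dom \<union> G8 ` Dom"

definition balc :: "'a ctup \<Rightarrow> bool" where
  "balc = (\<lambda>(S,a,b,c,x,y,z,v). (c \<in> A \<and> x \<in> B \<and> y \<in> B \<and> z \<in> B) \<or> (c \<in> B \<and> x \<in> A \<and> y \<in> A \<and> z \<in> A))"

lemma wit_mem:
  assumes "S \<in> KT V (k-3)" "p1 \<in> V" "p1 \<notin> S" "p2 \<in> V" "p2 \<notin> S" "p1 \<noteq> p2"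
    "u \<in> A" "u \<in> N2 V E S p1 p2" "w \<in> B" "w \<in> N2 V E S p1 p2" "r1 \<in> V" "r2 \<in> V" "r3 \<in> V"
  shows "((S,p1,p2,u,w),(r1,r2,r3)) \<in> Dom"
  using assms unfolding Dom_def WitS_def by auto

lemma classify:
  assumes sF: "\<sigma> \<in> Fset" and nb: "\<not> balc \<sigma>"
  shows "\<sigma> \<in> Ims"
proof -
  obtain S a b c x y z v where se: "\<sigma> = (S,a,b,c,x,y,z,v)" by (cases \<sigma>) auto
  define d where "d = dd a b c"
  have m: "S \<in> KT V (k-3)" "a \<in> A" "a \<notin> S" "b \<in> B" "b \<notin> S" "c \<in> N2 V E S a b"
    "x \<in> N2 V E S d c" "y \<in> N2 V E S d c" "y \<noteq> x" "z \<in> N2 V E S x y"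
    "v \<in> P3 (N2 V E S x d) (N2 V E S x y) (N2 V E S x z)"
    using sF unfolding se Fset_def d_def by auto
  have aV: "a \<in> V" "b \<in> V" "a \<noteq> b" using m AB disj by auto
  have cc: "c \<in> V" "c \<notin> S" "c \<noteq> a" "c \<noteq> b" using m(6) unfolding N2_iff by auto
  have xx: "x \<in> V" "x \<notin> S" "x \<noteq> d" "x \<noteq> c" using m(7) unfolding N2_iff by auto
  have yy: "y \<in> V" "y \<notin> S" "y \<noteq> d" "y \<noteq> c" using m(8) unfolding N2_iff by auto
  have zz: "z \<in> V" "z \<notin> S" "z \<noteq> x" "z \<noteq> y" using m(10) unfolding N2_iff by auto
  have vv: "v \<in> V" "v \<notin> S" "v \<noteq> x" using m(11) unfolding P3_def by (auto simp: N2_iff)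
  have rz: "y \<in> N2 V E S x z" using N2_rot[OF m(10) yy(1,2)] m(9) by auto
  have side: "\<And>t. t \<in> V \<Longrightarrow> t \<notin> A \<Longrightarrow> t \<in> B" "\<And>t. t \<in> V \<Longrightarrow> t \<notin> B \<Longrightarrow> t \<in> A" using AB by auto
  have sideAB: "\<And>t. t \<in> A \<Longrightarrow> t \<notin> B" using disj by auto
  show ?thesis
  proof (cases "c \<in> A")
    case cA: True
    hence dA: "d = a" unfolding d_def dd_def by simp
    have ba: "b \<in> N2 V E S a c" using N2_rot[OF m(6) aV(2) m(5) aV(3)] .
    have xN: "x \<in> N2 V E S a c" "y \<in> N2 V E S a c" using m(7,8) dA by auto
    show ?thesis
    proof (cases "x \<in> B")
      case False
      hence "x \<in> A" using side xx by auto
      hence "\<sigma> \<in> H1 ` Dom"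
        by (intro imgI[where t="((S,a,c,x,b),(y,z,v))"] wit_mem) (use m aV cc xx yy zz vv ba xN dA se in \<open>auto simp: H1_def\<close>)
      thus ?thesis unfolding Ims_def by blast
    next
      case xB: True
      show ?thesis
      proof (cases "y \<in> B")
        case False
        hence "y \<in> A" using side yy by auto
        hence "\<sigma> \<in> H2 ` Dom"
          by (intro imgI[where t="((S,a,c,y,b),(x,z,v))"] wit_mem) (use m aV cc xx yy zz vv ba xN dA se in \<open>auto simp: H2_def\<close>)
        thus ?thesis unfolding Ims_def by blast
      next
        case yB: True
        have zA: "z \<in> A" using nb cA xB yB zz side unfolding se balc_def by auto
        have ca: "c \<in> N2 V E S x a"
        proof -
          have "c \<in> N2 V E S a x" using N2_rot[OF xN(1) cc(1,2)] cc(3) by auto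
          thus ?thesis using N2_comm by metis
        qed
        have "v \<in> N2 V E S x a \<inter> N2 V E S x y \<or> v \<in> N2 V E S x a \<inter> N2 V E S x z \<or> v \<in> N2 V E S x y \<inter> N2 V E S x z"
          using m(11) dA unfolding P3_def by auto
        thus ?thesis
        proof (elim disjE)
          assume v: "v \<in> N2 V E S x a \<inter> N2 V E S x y"
          have "a \<in> N2 V E S x v" using N2_rot[of v V E S x a] v aV xx dA m(3) by auto
          moreover have "y \<in> N2 V E S x v" using N2_rot[of v V E S x y] v yy m(9) by auto
          ultimately have "\<sigma> \<in> H4 ` Dom"
            by (intro imgI[where t="((S,x,v,a,y),(b,c,z))"] wit_mem) (use m aV cc xx yy zz vv yB se in \<open>auto simp: H4_def\<close>)
          thus ?thesis unfolding Ims_def by blast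
        next
          assume v: "v \<in> N2 V E S x a \<inter> N2 V E S x z"
          show ?thesis
          proof (cases "v \<in> B")
            case True
            have "\<sigma> \<in> H5 ` Dom"
              by (intro imgI[where t="((S,x,a,c,v),(b,y,z))"] wit_mem) (use m aV cc xx yy zz vv v ca cA True dA se in \<open>auto simp: H5_def\<close>)
            thus ?thesis unfolding Ims_def by blast
          next
            case False
            hence "v \<in> A" using side vv by auto
            hence "\<sigma> \<in> H6 ` Dom"
              by (intro imgI[where t="((S,x,z,v,y),(a,b,c))"] wit_mem) (use m aV cc xx yy zz vv v rz yB se in \<open>auto simp: H6_def\<close>)
            thus ?thesis unfolding Ims_def by blast
          qed
        next
          assume v: "v \<in> N2 V E S x y \<inter> N2 V E S x z"
          show ?thesis
          proof (cases "v \<in> B")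
            case True
            have "\<sigma> \<in> H8 ` Dom"
              by (intro imgI[where t="((S,x,y,z,v),(a,b,c))"] wit_mem) (use m aV cc xx yy zz vv v zA True se in \<open>auto simp: H8_def\<close>)
            thus ?thesis unfolding Ims_def by blast
          next
            case False
            hence "v \<in> A" using side vv by auto
            hence "\<sigma> \<in> H6 ` Dom"
              by (intro imgI[where t="((S,x,z,v,y),(a,b,c))"] wit_mem) (use m aV cc xx yy zz vv v rz yB se in \<open>auto simp: H6_def\<close>)
            thus ?thesis unfolding Ims_def by blast
          qed
        qed
      qed
    qed
  next
    case cnA: False
    hence dB: "d = b" unfolding d_def dd_def by simp
    have cB: "c \<in> B" using cnA cc side by auto
    have ab: "a \<in> N2 V E S b c" using N2_rot[of c V E S b a] m(6) N2_comm aV m(3) by metis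
    have xN: "x \<in> N2 V E S b c" "y \<in> N2 V E S b c" using m(7,8) dB by auto
    show ?thesis
    proof (cases "x \<in> A")
      case False
      hence "x \<in> B" using side xx by auto
      hence "\<sigma> \<in> G1 ` Dom"
        by (intro imgI[where t="((S,b,c,a,x),(y,z,v))"] wit_mem) (use m aV cc xx yy zz vv ab xN dB se in \<open>auto simp: G1_def\<close>)
      thus ?thesis unfolding Ims_def by blast
    next
      case xA: True
      show ?thesis
      proof (cases "y \<in> A")
        case False
        hence "y \<in> B" using side yy by auto
        hence "\<sigma> \<in> G2 ` Dom"
          by (intro imgI[where t="((S,b,c,a,y),(x,z,v))"] wit_mem) (use m aV cc xx yy zz vv ab xN dB se in \<open>auto simp: G2_def\<close>)
        thus ?thesis unfolding Ims_def by blast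
      next
        case yA: True
        have zB: "z \<in> B" using nb cB xA yA zz side unfolding se balc_def by auto
        have cb: "c \<in> N2 V E S x b"
        proof -
          have "c \<in> N2 V E S b x" using N2_rot[of x V E S b c, OF xN(1) cc(1,2)] xx dB cc by auto
          thus ?thesis using N2_comm by metis
        qed
        have "v \<in> N2 V E S x b \<inter> N2 V E S x y \<or> v \<in> N2 V E S x b \<inter> N2 V E S x z \<or> v \<in> N2 V E S x y \<inter> N2 V E S x z"
          using m(11) dB unfolding P3_def by auto
        thus ?thesis
        proof (elim disjE)
          assume v: "v \<in> N2 V E S x b \<inter> N2 V E S x y"
          have "b \<in> N2 V E S x v" using N2_rot[of v V E S x b] v aV m(5) xx dB by auto
          moreover have "y \<in> N2 V E S x v" using N2_rot[of v V E S x y] v yy m(9) by auto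
          ultimately have "\<sigma> \<in> G4 ` Dom"
            by (intro imgI[where t="((S,x,v,y,b),(a,c,z))"] wit_mem) (use m aV cc xx yy zz vv yA se in \<open>auto simp: G4_def\<close>)
          thus ?thesis unfolding Ims_def by blast
        next
          assume v: "v \<in> N2 V E S x b \<inter> N2 V E S x z"
          show ?thesis
          proof (cases "v \<in> A")
            case True
            have "\<sigma> \<in> G5 ` Dom"
              by (intro imgI[where t="((S,x,b,v,c),(a,y,z))"] wit_mem) (use m aV cc xx yy zz vv v cb cB True dB se in \<open>auto simp: G5_def\<close>)
            thus ?thesis unfolding Ims_def by blast
          next
            case False
            hence "v \<in> B" using side vv by auto
            hence "\<sigma> \<in> G6 ` Dom"
              by (intro imgI[where t="((S,x,z,y,v),(a,b,c))"] wit_mem) (use m aV cc xx yy zz vv v rz yA se in \<open>auto simp: G6_def\<close>)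
            thus ?thesis unfolding Ims_def by blast
          qed
        next
          assume v: "v \<in> N2 V E S x y \<inter> N2 V E S x z"
          show ?thesis
          proof (cases "v \<in> A")
            case True
            have "\<sigma> \<in> G8 ` Dom"
              by (intro imgI[where t="((S,x,y,v,z),(a,b,c))"] wit_mem) (use m aV cc xx yy zz vv v zB True se in \<open>auto simp: G8_def\<close>)
            thus ?thesis unfolding Ims_def by blast
          next
            case False
            hence "v \<in> B" using side vv by auto
            hence "\<sigma> \<in> G6 ` Dom"
              by (intro imgI[where t="((S,x,z,y,v),(a,b,c))"] wit_mem) (use m aV cc xx yy zz vv v rz yA se in \<open>auto simp: G6_def\<close>)
            thus ?thesis unfolding Ims_def by blast
          qed
        qed
      qed
    qed
  qed
qed

end

lemma finite_WitS: assumes "finite V" shows "finite (WitS V E A B k)"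
proof -
  have "WitS V E A B k \<subseteq> Pow V \<times> V \<times> V \<times> V \<times> V"
    unfolding WitS_def KT_def N2_iff by auto
  moreover have "finite (Pow V \<times> V \<times> V \<times> V \<times> V)" using assms by auto
  ultimately show ?thesis by (rule finite_subset)
qed

lemma PB_fin: assumes "finite V" shows "finite (proto_balancers k V E A)"
proof -
  have "proto_balancers k V E A \<subseteq> Pow (Pow V)"
    unfolding proto_balancers_def is_proto_balancer_def by auto
  thus ?thesis using assms by (meson finite_Pow_iff finite_subset)
qed

context ctx
begin

lemma finite_Dom: "finite Dom" unfolding Dom_def using finite_WitS[OF fV] fV by auto

lemma card_Dom: "card Dom = card (WitS V E A B k) * (card V * (card V * card V))"
  unfolding Dom_def by (simp add: card_cartesian_product)

lemma card_Ims: "card Ims \<le> 12 * card Dom"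
proof -
  have c: "\<And>f. card (f ` Dom) \<le> card Dom" using finite_Dom card_image_le by blast
  have "card Ims \<le> card (H1 ` Dom) + card (H2 ` Dom) + card (H4 ` Dom) + card (H5 ` Dom) + card (H6 ` Dom) + card (H8 ` Dom) +
     card (G1 ` Dom) + card (G2 ` Dom) + card (G4 ` Dom) + card (G5 ` Dom) + card (G6 ` Dom) + card (G8 ` Dom)"
    unfolding Ims_def
    apply (rule order_trans[OF card_Un_le], rule add_right_mono)+
    apply (rule order_refl)
    done
  also have "\<dots> \<le> 12 * card Dom" using c[of H1] c[of H2] c[of H4] c[of H5] c[of H6] c[of H8]
     c[of G1] c[of G2] c[of G4] c[of G5] c[of G6] c[of G8] by linarith
  finally show ?thesis .
qed

definition Gbal where "Gbal = {\<sigma> \<in> Fset. balc \<sigma>}"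
definition Yf :: "'a ctup \<Rightarrow> 'a set set" where "Yf = (\<lambda>(S,a,b,c,x,y,z,v). Ysets S (dd a b c) c x y z)"

lemma finite_Fset: "finite Fset"
  unfolding Fset_def using fV fA finite_KT[OF fV] finite_N2[OF fV]
  by (auto intro!: finite_SigmaI finite_P3 simp: finite_N2[OF fV])

lemma Yf_in: assumes "\<sigma> \<in> Gbal" shows "Yf \<sigma> \<in> proto_balancers k V E A \<union> proto_balancers k V E B"
proof -
  obtain S a b c x y z v where se: "\<sigma> = (S,a,b,c,x,y,z,v)" by (cases \<sigma>) auto
  define d where "d = dd a b c"
  have m: "S \<in> KT V (k-3)" "a \<in> A" "a \<notin> S" "b \<in> B" "b \<notin> S" "c \<in> N2 V E S a b"
    "x \<in> N2 V E S d c" "y \<in> N2 V E S d c" "y \<noteq> x" "z \<in> N2 V E S x y"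
    and bc: "(c \<in> A \<and> x \<in> B \<and> y \<in> B \<and> z \<in> B) \<or> (c \<in> B \<and> x \<in> A \<and> y \<in> A \<and> z \<in> A)"
    using assms unfolding se Gbal_def Fset_def d_def balc_def by auto
  have cc: "c \<notin> S" "c \<noteq> a" "c \<noteq> b" using m(6) unfolding N2_iff by auto
  show ?thesis
  proof (cases "c \<in> A")
    case True
    hence "d = a" unfolding d_def dd_def by simp
    moreover have "x \<in> B" "y \<in> B" "z \<in> B" using bc True disj by auto
    ultimately have "Ysets S a c x y z \<in> proto_balancers k V E A"
      using bal_ok[OF AB disj m(1), of a c x y z E] m True cc by auto
    moreover have "dd a b c = a" using \<open>d = a\<close> unfolding d_def .
    ultimately show ?thesis unfolding se Yf_def by simp
  next
    case False
    hence "d = b" unfolding d_def dd_def by simp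
    moreover have cB: "c \<in> B" "x \<in> A" "y \<in> A" "z \<in> A" using bc False by auto
    have AB': "B \<union> A = V" "B \<inter> A = {}" using AB disj by auto
    ultimately have "Ysets S b c x y z \<in> proto_balancers k V E B"
      using bal_ok[OF AB' m(1), of b c x y z E] m cB cc by auto
    moreover have "dd a b c = b" using \<open>d = b\<close> unfolding d_def .
    ultimately show ?thesis unfolding se Yf_def by simp
  qed
qed

lemma Ysets_Un: "\<Union> (Ysets S d c x y z) = S \<union> {d,c,x,y,z}"
  unfolding Ysets_def by auto

lemma fiber_bal:
  assumes s0: "\<sigma>0 \<in> Gbal"
  shows "card {\<sigma> \<in> Gbal. Yf \<sigma> = Yf \<sigma>0} \<le> 2 * 2^(k+2) * (k+2)^5 * (card V * card V)"
proof -
  obtain S0 a0 b0 c0 x0 y0 z0 v0 where se0: "\<sigma>0 = (S0,a0,b0,c0,x0,y0,z0,v0)" by (cases \<sigma>0) auto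
  define U where "U = \<Union> (Yf \<sigma>0)"
  have S0: "S0 \<in> KT V (k-3)" using s0 unfolding se0 Gbal_def Fset_def by auto
  have fS0: "finite S0" using S0 fV unfolding KT_def by (auto intro: finite_subset)
  have Ue: "U = S0 \<union> {dd a0 b0 c0, c0, x0, y0, z0}" unfolding U_def se0 Yf_def by (simp add: Ysets_Un)
  have fU: "finite U" using Ue fS0 by simp
  have cU: "card U \<le> k + 2"
  proof -
    have "card U \<le> card S0 + card {dd a0 b0 c0, c0, x0, y0, z0}" unfolding Ue by (rule card_Un_le)
    also have "card {dd a0 b0 c0, c0, x0, y0, z0} \<le> 5" by (simp add: card_insert_le_m1) 
    finally show ?thesis using S0 k3 unfolding KT_def by simp
  qed
  define F1 where "F1 = Pow U \<times> U \<times> V \<times> U \<times> U \<times> U \<times> U \<times> V"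
  define F2 where "F2 = Pow U \<times> V \<times> U \<times> U \<times> U \<times> U \<times> U \<times> V"
  have sub: "{\<sigma> \<in> Gbal. Yf \<sigma> = Yf \<sigma>0} \<subseteq> F1 \<union> F2"
  proof
    fix \<sigma> assume s: "\<sigma> \<in> {\<sigma> \<in> Gbal. Yf \<sigma> = Yf \<sigma>0}"
    obtain S a b c x y z v where se: "\<sigma> = (S,a,b,c,x,y,z,v)" by (cases \<sigma>) auto
    have m: "a \<in> V" "b \<in> V" "v \<in> V" using s AB unfolding se Gbal_def Fset_def P3_def by (auto simp: N2_iff)
    have "U = \<Union> (Yf \<sigma>)" using s unfolding U_def by simp
    also have "\<dots> = S \<union> {dd a b c, c, x, y, z}" unfolding se Yf_def by (simp add: Ysets_Un)
    finally have "U = S \<union> {dd a b c, c, x, y, z}" .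
    hence "S \<subseteq> U" "dd a b c \<in> U" "c \<in> U" "x \<in> U" "y \<in> U" "z \<in> U" by auto
    moreover have "dd a b c = a \<or> dd a b c = b" unfolding dd_def by auto
    ultimately show "\<sigma> \<in> F1 \<union> F2" unfolding F1_def F2_def se using m by auto
  qed
  have "card (F1 \<union> F2) \<le> card F1 + card F2" by (rule card_Un_le)
  also have "card F1 = 2 ^ card U * (card U * (card V * (card U * (card U * (card U * (card U * card V))))))"
    unfolding F1_def by (simp add: card_cartesian_product card_Pow fU)
  also have "card F2 = 2 ^ card U * (card V * (card U * (card U * (card U * (card U * (card U * card V))))))"
    unfolding F2_def by (simp add: card_cartesian_product card_Pow fU)
  finally have "card (F1 \<union> F2) \<le> 2 * 2 ^ card U * card U ^ 5 * (card V * card V)"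
    by (simp add: algebra_simps power_numeral_reduce)
  also have "\<dots> \<le> 2 * 2 ^ (k+2) * (k+2) ^ 5 * (card V * card V)"
  proof -
    have "2 ^ card U \<le> (2::nat) ^ (k+2)" using cU by (intro power_increasing) auto
    moreover have "card U ^ 5 \<le> (k+2) ^ 5" using cU by (simp add: power_mono)
    ultimately show ?thesis by (intro mult_le_mono mult_le_mono1 mult_le_mono2) auto
  qed
  finally have "card (F1 \<union> F2) \<le> 2 * 2 ^ (k+2) * (k+2) ^ 5 * (card V * card V)" .
  moreover have "finite (F1 \<union> F2)" unfolding F1_def F2_def using fU fV by auto
  ultimately show ?thesis using card_mono[OF _ sub] by (meson order_trans)
qed

lemma Gbal_bound:
  "card Gbal \<le> (2 * 2^(k+2) * (k+2)^5 * (card V * card V)) * card (proto_balancers k V E A \<union> proto_balancers k V E B)"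
proof -
  have fG: "finite Gbal" unfolding Gbal_def using finite_Fset by auto
  have "card Gbal \<le> (2 * 2^(k+2) * (k+2)^5 * (card V * card V)) * card (Yf ` Gbal)"
  proof (rule card_fiber_bound[OF fG])
    fix Y assume "Y \<in> Yf ` Gbal"
    then obtain \<sigma>0 where "\<sigma>0 \<in> Gbal" "Y = Yf \<sigma>0" by auto
    thus "card {x \<in> Gbal. Yf x = Y} \<le> 2 * 2^(k+2) * (k+2)^5 * (card V * card V)" using fiber_bal by simp
  qed
  also have "card (Yf ` Gbal) \<le> card (proto_balancers k V E A \<union> proto_balancers k V E B)"
  proof -
    have "Yf ` Gbal \<subseteq> proto_balancers k V E A \<union> proto_balancers k V E B" using Yf_in by blast
    thus ?thesis using PB_fin[OF fV] by (intro card_mono) auto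
  qed
  finally show ?thesis by (simp add: mult_le_mono2)
qed

lemma F_ub:
  "card Fset \<le> (2 * 2^(k+2) * (k+2)^5 * (card V * card V)) * card (proto_balancers k V E A \<union> proto_balancers k V E B)
     + 12 * (card (WitS V E A B k) * (card V * (card V * card V)))"
proof -
  have "Fset \<subseteq> Gbal \<union> Ims" using classify unfolding Gbal_def by blast
  hence "card Fset \<le> card (Gbal \<union> Ims)" by (intro card_mono) (use finite_Fset finite_Dom in \<open>auto simp: Gbal_def Ims_def\<close>)
  also have "\<dots> \<le> card Gbal + card Ims" by (rule card_Un_le)
  finally show ?thesis using Gbal_bound card_Ims card_Dom by linarith
qed

end

lemma binom_le_pred: "(n - 1) choose j \<le> n choose (j::nat)"
proof (cases n)
  case 0 thus ?thesis by simp
next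
  case (Suc m)
  show ?thesis
  proof (cases j)
    case 0 thus ?thesis by simp
  next
    case (Suc i) thus ?thesis using \<open>n = Suc m\<close> by simp
  qed
qed

lemma binom_step: "n choose (Suc j) \<le> n * (n choose j)"
proof -
  have "n choose (Suc j) \<le> Suc j * (n choose Suc j)" by simp
  also have "\<dots> = n * ((n - 1) choose j)" by (rule binomial_absorption)
  also have "\<dots> \<le> n * (n choose j)" using binom_le_pred by (simp add: mult_le_mono2)
  finally show ?thesis .
qed

lemma binom_step2: assumes "k \<ge> 3" shows "n choose (k - 1) \<le> n * n * (n choose (k - 3))"
proof -
  have e: "k - 1 = Suc (Suc (k - 3))" using assms by simp
  have "n choose (k-1) \<le> n * (n choose Suc (k - 3))" unfolding e by (rule binom_step)
  also have "\<dots> \<le> n * (n * (n choose (k - 3)))" using binom_step by (simp add: mult_le_mono2)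
  finally show ?thesis by (simp add: mult.assoc)
qed

lemma mm: "(a::real) \<le> a' \<Longrightarrow> b \<le> b' \<Longrightarrow> 0 \<le> a \<Longrightarrow> 0 \<le> b \<Longrightarrow> a * b \<le> a' * b'"
  by (meson mult_mono order_trans)

lemma final_arith:
  fixes n Cb PB W F Kr e g L M :: real
  assumes Flb: "Cb * n^7 * e / 15552 \<le> F" and Fub: "F \<le> Kr * n^2 * PB + 12 * n^3 * W"
    and Wub: "W \<le> L * 2 * g * n^4 * Cb" and gL: "24 * L * g \<le> e / 31104"
    and Cb: "n^j / M \<le> Cb" and pos: "M > 0" "n > 0" "Kr > 0" "e > 0"
  shows "e / (31104 * Kr * M) * n^(j+5) \<le> PB"
proof -
  have Cb0: "0 \<le> Cb" using Cb pos by (smt (verit) divide_nonneg_pos zero_less_power)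
  define X where "X = n^7 * Cb"
  have X0: "0 \<le> X" unfolding X_def using Cb0 pos by simp
  have "12 * n^3 * W \<le> 12 * n^3 * (L * 2 * g * n^4 * Cb)" using Wub pos by (intro mult_left_mono) auto
  also have "\<dots> = (24 * L * g) * X" unfolding X_def by (simp add: algebra_simps power_add[symmetric] numeral_eq_Suc)
  also have "\<dots> \<le> (e / 31104) * X" using gL X0 by (intro mult_right_mono) auto
  finally have a: "12 * n^3 * W \<le> (e / 31104) * X" .
  have b: "(e/15552) * X \<le> F" using Flb unfolding X_def by (simp add: algebra_simps)
  have c: "(e/31104) * X \<le> Kr * n^2 * PB" using a b Fub by (simp add: field_simps)
  have "X \<ge> n^7 * (n^j / M)" unfolding X_def using Cb pos by (intro mult_left_mono) auto
  hence "(e/31104) * (n^7 * (n^j / M)) \<le> (e/31104) * X" using pos by (intro mult_left_mono) auto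
  hence d: "(e/31104) * (n^7 * (n^j / M)) \<le> (Kr * n^2) * PB" by (rule order_trans[OF _ c])
  have kn: "Kr * n^2 > 0" using pos by simp
  have "(e/31104) * (n^7 * (n^j / M)) \<le> PB * (Kr * n^2)" using d by (metis mult.commute)
  hence "PB \<ge> (e/31104) * (n^7 * (n^j / M)) / (Kr * n^2)" by (simp only: pos_divide_le_eq[OF kn])
  moreover have "(e/31104) * (n^7 * (n^j / M)) / (Kr * n^2) = e / (31104 * Kr * M) * n^(j+5)"
  proof -
    have "n^7 = n^2 * n^5" by (simp add: power_add[symmetric])
    hence "(e/31104) * (n^7 * (n^j / M)) / (Kr * n^2) = (e/31104) * (n^5 * (n^j / M)) / Kr"
      using pos by (simp add: field_simps)
    also have "\<dots> = e / (31104 * Kr * M) * n^(j+5)" using pos by (simp add: field_simps power_add)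
    finally show ?thesis .
  qed
  ultimately show ?thesis by simp
qed

lemma main_count:
  fixes V :: "'a set"
  assumes kg: "kgraph k V E" and k3: "k \<ge> 3" and cV: "card V = n" and nbig: "n \<ge> 12*k + 12"
    and e: "\<epsilon> > 0" and cod0: "real (min_codegree k V E) \<ge> (1/3 + \<epsilon>) * real n"
    and sep: "mu_separation k \<gamma> \<mu> V E A B" and mg: "0 < \<mu>" "\<mu> \<le> \<gamma>"
    and g1: "\<gamma> \<le> 1/100" and g2: "\<gamma> \<le> \<epsilon> / (746496 * real ((k-1)^2))"
  shows "\<epsilon> / (31104 * real (2 * 2^(k+2) * (k+2)^5) * real ((k-3)^(k-3))) * real n ^ (k+2)
     \<le> real (card (proto_balancers k V E A \<union> proto_balancers k V E B))"
proof -
  define N where "N = real n"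
  define d0 where "d0 = real (min_codegree k V E)"
  have fV: "finite V" using kg unfolding kgraph_def by auto
  have AB: "A \<noteq> {}" "B \<noteq> {}" "A \<inter> B = {}" "A \<union> B = V" using sep unfolding mu_separation_def by auto
  have fA: "finite A" "finite B" using AB fV by auto
  have g0: "0 \<le> \<gamma>" using mg by simp
  have N0: "N \<ge> 12 * real k + 12" unfolding N_def using nbig by simp
  have cod: "\<And>T. T \<in> KT V (k-1) \<Longrightarrow> d0 \<le> real (card (Nb V E T))"
    unfolding d0_def using codeg_le_Nb[OF kg] k3 by simp
  have d0N: "d0 \<ge> (1/3 + \<epsilon>) * N" using cod0 unfolding d0_def N_def .
  have eN: "0 \<le> \<epsilon> * N" using e N0 by (intro mult_nonneg_nonneg) auto
  have d0N': "d0 \<ge> N/3 + \<epsilon> * N" using d0N by (simp add: algebra_simps)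
  have d03: "real (card V) / 3 \<le> d0" using d0N' eN unfolding N_def cV by linarith
  define C where "C = real (card V choose (k-1))"
  have wU: "real (card (WitT V E A B k)) \<le> 2*\<gamma>*real (card A)*real (card B)*C"
    unfolding C_def by (rule witT_upper[OF kg _ AB(4,3) sep mg(2) g0]) (use k3 in simp)
  have wU': "real (card (WitT V E B A k)) \<le> 2*\<gamma>*real (card B)*real (card A)*C"
    using wU witT_swap[of V E B A k] by (simp add: algebra_simps)
  have nk: "card V \<ge> k" using nbig cV by simp
  have g36: "\<gamma> < 1/36" using g1 by linarith
  have sA: "real (card V) / 6 < real (card A)"
    by (rule size_lemma[OF kg k3 AB(4,3) AB(1) cod d03 wU[unfolded C_def] g36 g0 nk])
  have AB': "B \<union> A = V" "B \<inter> A = {}" using AB by auto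
  have sB: "real (card V) / 6 < real (card B)"
    by (rule size_lemma[OF kg k3 AB' AB(2) cod d03 wU'[unfolded C_def] g36 g0 nk])
  interpret ctx k V E A B d0 using kg k3 AB(4,3) cod by unfold_locales auto
  define q where "q = (3*d0 - real (card V))/2"
  have Ak: "real k \<le> real (card A)" using sA N0 unfolding N_def cV by simp
  have Bk: "real k \<le> real (card B)" using sB N0 unfolding N_def cV by simp
  have d1: "1 \<le> d0" using d03 N0 unfolding N_def cV by simp
  have q0: "0 \<le> q"
  proof -
    have "0 \<le> 3*d0 - real (card V)" using d0N' eN unfolding N_def cV by linarith
    thus ?thesis unfolding q_def by simp
  qed
  define Cb where "Cb = real (n choose (k-3))"
  have Cb0: "0 \<le> Cb" unfolding Cb_def by simp
  note Flb0 = F_lb[OF Ak Bk d1 q0[unfolded q_def]]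
  have lb1: "N/12 \<le> real (card A) - real (k-3)" using sA N0 unfolding N_def cV by simp
  have lb2: "N/12 \<le> real (card B) - real (k-3)" using sB N0 unfolding N_def cV by simp
  have lb3: "N/3 \<le> d0" using d03 unfolding N_def cV .
  have lb4: "N/6 \<le> d0 - 1" using d03 N0 unfolding N_def cV by simp
  have lb5: "3*\<epsilon>*N/2 \<le> q"
  proof -
    have "3*\<epsilon>*N \<le> 3*d0 - real (card V)" using d0N' unfolding N_def cV by linarith
    hence "(3*\<epsilon>*N)/2 \<le> (3*d0 - real (card V))/2" by (rule divide_right_mono) simp
    thus ?thesis unfolding q_def by simp
  qed
  have Npos: "N > 0" using N0 by simp
  have "Cb * ((N/12) * ((N/12) * ((N/3) * ((N/3) * ((N/6) * ((N/3) * (3*\<epsilon>*N/2))))))) \<le>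
        Cb * ((real (card A) - real (k-3)) * ((real (card B) - real (k-3)) * (d0 * (d0 * ((d0 - 1) * (d0 * q))))))"
    using Npos e Cb0 lb1 lb2 lb3 lb4 lb5
    by (intro mult_left_mono mm) (auto simp: mult_nonneg_nonneg)
  also have "\<dots> \<le> real (card Fset)" using Flb0 unfolding q_def Cb_def cV .
  finally have Flb: "Cb * N^7 * \<epsilon> / 15552 \<le> real (card Fset)"
    by (simp add: algebra_simps numeral_eq_Suc)
  define Kr where "Kr = real (2 * 2^(k+2) * (k+2)^5)"
  define PB where "PB = real (card (proto_balancers k V E A \<union> proto_balancers k V E B))"
  define W where "W = real (card (WitS V E A B k))"
  have Fub: "real (card Fset) \<le> Kr * N^2 * PB + 12 * N^3 * W"
  proof -
    have "real (card Fset) \<le> real ((2 * 2^(k+2) * (k+2)^5 * (card V * card V)) * card (proto_balancers k V E A \<union> proto_balancers k V E B)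
     + 12 * (card (WitS V E A B k) * (card V * (card V * card V))))"
      using F_ub by (simp only: of_nat_le_iff)
    thus ?thesis unfolding Kr_def PB_def W_def N_def cV by (simp add: algebra_simps power2_eq_square power3_eq_cube)
  qed
  have L0: "real ((k-1)^2) \<ge> 0" by simp
  have Wub: "W \<le> real ((k-1)^2) * 2 * \<gamma> * N^4 * Cb"
  proof -
    have "W \<le> real ((k-1)*(k-1)) * real (card (WitT V E A B k))"
      unfolding W_def using witS_le[OF kg k3, of A B] by (metis of_nat_le_iff of_nat_mult)
    also have "\<dots> \<le> real ((k-1)*(k-1)) * (2*\<gamma>*real (card A)*real (card B)*C)"
      using wU by (intro mult_left_mono) auto
    also have "\<dots> \<le> real ((k-1)*(k-1)) * (2*\<gamma>*N*N*(N*N*Cb))"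
    proof -
      have a: "real (card A) \<le> N" "real (card B) \<le> N" unfolding N_def cV[symmetric]
        using AB fV by (auto intro: card_mono)
      have "C \<le> N*N*Cb" unfolding C_def N_def Cb_def cV using binom_step2[OF k3, of n]
        by (metis of_nat_le_iff of_nat_mult)
      hence "2*\<gamma>*real (card A)*real (card B)*C \<le> 2*\<gamma>*N*N*(N*N*Cb)"
        using a g0 by (intro mult_mono) (auto simp: mult_nonneg_nonneg C_def)
      thus ?thesis by (intro mult_left_mono) auto
    qed
    also have "\<dots> = real ((k-1)^2) * 2 * \<gamma> * N^4 * Cb" by (simp add: power2_eq_square numeral_eq_Suc algebra_simps)
    finally show ?thesis .
  qed
  have gL: "24 * real ((k-1)^2) * \<gamma> \<le> \<epsilon> / 31104"
  proof (cases "k - 1 = 0")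
    case True thus ?thesis using e by simp
  next
    case False
    hence Lp: "real ((k-1)^2) > 0" by simp
    have "\<gamma> * (746496 * real ((k-1)^2)) \<le> \<epsilon>" using g2 Lp by (simp add: le_divide_eq)
    thus ?thesis by (simp add: algebra_simps)
  qed
  define M where "M = real ((k-3)^(k-3))"
  have "(0::nat) < (k-3)^(k-3)" by (cases "k - 3") (simp_all del: power_Suc)
  hence Mpos: "M > 0" unfolding M_def by (simp only: of_nat_0_less_iff)
  have Cbl: "N^(k-3) / M \<le> Cb"
  proof -
    have "(N / real (k-3))^(k-3) \<le> Cb"
    proof -
      have "k - 3 \<le> n" using nbig by simp
      from binomial_ge_n_over_k_pow_k[where 'a=real, OF this] show ?thesis by (simp add: N_def Cb_def)
    qed
    moreover have "(N / real (k-3))^(k-3) = N^(k-3) / M" unfolding M_def by (simp add: power_divide)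
    ultimately show ?thesis by simp
  qed
  have Krp: "Kr > 0" unfolding Kr_def by simp
  have "\<epsilon> / (31104 * Kr * M) * N^((k-3)+5) \<le> PB"
    by (rule final_arith[OF Flb Fub Wub gL Cbl Mpos Npos Krp e])
  moreover have "(k-3)+5 = k+2" using k3 by simp
  ultimately show ?thesis unfolding Kr_def M_def PB_def N_def by simp
qed

theorem lemma7p5:
  "\<forall>k::nat. k \<ge> 3 \<longrightarrow> (\<forall>\<epsilon>::real. \<epsilon> > 0 \<longrightarrow>
     (\<exists>\<gamma>0::real. \<gamma>0 > 0 \<and> (\<exists>\<rho>::real. \<rho> > 0 \<and>
       (\<forall>\<mu> \<gamma>::real. 0 < \<mu> \<and> \<mu> \<le> \<gamma> \<and> \<gamma> \<le> \<gamma>0 \<longrightarrow>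
         (\<exists>n0::nat. \<forall>n \<ge> n0. \<forall>(V::'a set) E A B.
            kgraph k V E \<and> card V = n \<and>
            real (min_codegree k V E) \<ge> (1/3 + \<epsilon>) * real n \<and>
            mu_separation k \<gamma> \<mu> V E A B \<longrightarrow>
            real (card (proto_balancers k V E A \<union> proto_balancers k V E B))
              \<ge> \<rho> * real n ^ (k + 2))))))"
proof (intro allI impI)
  fix k :: nat and \<epsilon> :: real
  assume k3: "k \<ge> 3" and e: "\<epsilon> > 0"
  define \<gamma>0 where "\<gamma>0 = min (1/100) (\<epsilon> / (746496 * real ((k-1)^2)))"
  define \<rho> where "\<rho> = \<epsilon> / (31104 * real (2 * 2^(k+2) * (k+2)^5) * real ((k-3)^(k-3)))"
  have L: "real ((k-1)^2) > 0" using k3 by simp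
  have g0: "\<gamma>0 > 0" unfolding \<gamma>0_def using e L by simp
  have "(0::nat) < (k-3)^(k-3)" by (cases "k - 3") (simp_all del: power_Suc)
  hence "real ((k-3)^(k-3)) > 0" by (simp only: of_nat_0_less_iff)
  hence r0: "\<rho> > 0" unfolding \<rho>_def using e by simp
  have main: "\<forall>\<mu> \<gamma>::real. 0 < \<mu> \<and> \<mu> \<le> \<gamma> \<and> \<gamma> \<le> \<gamma>0 \<longrightarrow>
         (\<exists>n0::nat. \<forall>n \<ge> n0. \<forall>(V::'a set) E A B.
            kgraph k V E \<and> card V = n \<and>
            real (min_codegree k V E) \<ge> (1/3 + \<epsilon>) * real n \<and>
            mu_separation k \<gamma> \<mu> V E A B \<longrightarrow>
            real (card (proto_balancers k V E A \<union> proto_balancers k V E B))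
              \<ge> \<rho> * real n ^ (k + 2))"
  proof (intro allI impI)
    fix \<mu> \<gamma> :: real
    assume h: "0 < \<mu> \<and> \<mu> \<le> \<gamma> \<and> \<gamma> \<le> \<gamma>0"
    have g1: "\<gamma> \<le> 1/100" and g2: "\<gamma> \<le> \<epsilon> / (746496 * real ((k-1)^2))"
      using h unfolding \<gamma>0_def by auto
    show "\<exists>n0::nat. \<forall>n \<ge> n0. \<forall>(V::'a set) E A B.
            kgraph k V E \<and> card V = n \<and>
            real (min_codegree k V E) \<ge> (1/3 + \<epsilon>) * real n \<and>
            mu_separation k \<gamma> \<mu> V E A B \<longrightarrow>
            real (card (proto_balancers k V E A \<union> proto_balancers k V E B))
              \<ge> \<rho> * real n ^ (k + 2)"
    proof (rule exI[of _ "12*k+12"], intro allI impI)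
      fix n :: nat and V :: "'a set" and E A B
      assume n: "12*k+12 \<le> n"
        and H: "kgraph k V E \<and> card V = n \<and> real (min_codegree k V E) \<ge> (1/3 + \<epsilon>) * real n \<and>
            mu_separation k \<gamma> \<mu> V E A B"
      show "real (card (proto_balancers k V E A \<union> proto_balancers k V E B)) \<ge> \<rho> * real n ^ (k + 2)"
        unfolding \<rho>_def
        using main_count[of k V E n \<epsilon> \<gamma> \<mu> A B] H n k3 e h g1 g2 by auto
    qed
  qed
  show "\<exists>\<gamma>0::real. \<gamma>0 > 0 \<and> (\<exists>\<rho>::real. \<rho> > 0 \<and>
       (\<forall>\<mu> \<gamma>::real. 0 < \<mu> \<and> \<mu> \<le> \<gamma> \<and> \<gamma> \<le> \<gamma>0 \<longrightarrow>
         (\<exists>n0::nat. \<forall>n \<ge> n0. \<forall>(V::'a set) E A B.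
            kgraph k V E \<and> card V = n \<and>
            real (min_codegree k V E) \<ge> (1/3 + \<epsilon>) * real n \<and>
            mu_separation k \<gamma> \<mu> V E A B \<longrightarrow>
            real (card (proto_balancers k V E A \<union> proto_balancers k V E B))
              \<ge> \<rho> * real n ^ (k + 2))))"
    using g0 r0 main by blast
qed

end
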